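(* Let $U$ be the open unit disk in $\mathbb R^{2n}$ with the canonical symplectic form $\omega=\sum_{i=1}^n dx^i\wedge dx^{i+n}$. If $B_k\in\mathcal P^k(U)$ is $d$-closed and $0<k\le n$, then there exists $B'_{k-1}\in\mathcal P'^{k-1}(U)$ such that $B_k=dB'_{k-1}$.
   Context: $L(A)=\omega\wedge A$, $\Lambda(A)=\frac12(\omega^{-1})^{ij}\, i_{\partial_{x^i}} i_{\partial_{x^j}}A$; a $k$-form $B$ ($k\le n$) is primitive if $\Lambda B=0$; $\mathcal P^k(U)$ is the space of smooth primitive $k$-forms on $U$. For $B\in\mathcal P^s(U)$ write uniquely $dB=B^0_{s+1}+\omega\wedge B^1_{s-1}$ with $B^0_{s+1},B^1_{s-1}$ primitive; set $\partial_-B=B^1_{s-1}$. $\mathcal P'^{k}(U)$ denotes the space of primitive $k$-forms $B$ with $\partial_-B=0$. *)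

theory Defs
  imports "HOL-Analysis.Analysis"
begin

text \<open>Points of R^(2n) are functions x :: nat => real with x i = 0 for i >= 2n
  (coordinates x^1..x^(2n) of the paper are indices 0..2n-1 here). An (algebraic) form at a point
  is a coefficient function a :: nat set => real: a I is the coefficient of dx^(i_1) wedge ... wedge
  dx^(i_k), where I = {i_1 < ... < i_k}. A differential form is a map from points to such
  coefficient functions; only its values on U matter.\<close>

type_synonym point = "nat \<Rightarrow> real"
type_synonym alg_form = "nat set \<Rightarrow> real"
type_synonym dform = "point \<Rightarrow> alg_form"

definition unit_disk :: "nat \<Rightarrow> point set" where
  "unit_disk n = {x. (\<forall>i\<ge>2*n. x i = 0) \<and> (\<Sum>i<2*n. (x i)^2) < 1}"

definition zero_form :: alg_form where
  "zero_form = (\<lambda>I. 0)"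

definition is_alg_form :: "nat \<Rightarrow> nat \<Rightarrow> alg_form \<Rightarrow> bool" where
  "is_alg_form n k a \<longleftrightarrow> (\<forall>I. a I \<noteq> 0 \<longrightarrow> I \<subseteq> {..<2*n} \<and> card I = k)"

text \<open>sign of dx^I wedge dx^J = eps I J * dx^(I union J) for disjoint I, J\<close>
definition eps :: "nat set \<Rightarrow> nat set \<Rightarrow> real" where
  "eps I J = (-1) ^ card {(p,q). p \<in> I \<and> q \<in> J \<and> q < p}"

definition wedge :: "alg_form \<Rightarrow> alg_form \<Rightarrow> alg_form" where
  "wedge a b = (\<lambda>K. \<Sum>I\<in>Pow K. eps I (K - I) * a I * b (K - I))"

definition omega :: "nat \<Rightarrow> alg_form" where
  "omega n = (\<lambda>K. if \<exists>i<n. K = {i, i + n} then 1 else 0)"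

definition Lop :: "nat \<Rightarrow> alg_form \<Rightarrow> alg_form" where
  "Lop n a = wedge (omega n) a"

definition interior :: "nat \<Rightarrow> alg_form \<Rightarrow> alg_form" where
  "interior j a = (\<lambda>J. if j \<in> J then 0
                      else (-1) ^ card {i\<in>J. i < j} * a (insert j J))"

text \<open>entries of the inverse of the matrix (omega_ij) = (omega(d_i, d_j)), omega_(i,i+n) = 1\<close>
definition omega_inv :: "nat \<Rightarrow> nat \<Rightarrow> nat \<Rightarrow> real" where
  "omega_inv n i j = (if i < n \<and> j = i + n then -1
                      else if j < n \<and> i = j + n then 1 else 0)"

definition Lambda :: "nat \<Rightarrow> alg_form \<Rightarrow> alg_form" where
  "Lambda n a = (\<lambda>K. (1/2) * (\<Sum>i<2*n. \<Sum>j<2*n.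
       omega_inv n i j * interior i (interior j a) K))"

definition pd :: "nat \<Rightarrow> (point \<Rightarrow> real) \<Rightarrow> point \<Rightarrow> real" where
  "pd j f x = deriv (\<lambda>t. f (x(j := x j + t))) 0"

definition iter_pd :: "nat list \<Rightarrow> (point \<Rightarrow> real) \<Rightarrow> point \<Rightarrow> real" where
  "iter_pd js f = fold pd js f"

definition smooth_on :: "nat \<Rightarrow> point set \<Rightarrow> (point \<Rightarrow> real) \<Rightarrow> bool" where
  "smooth_on n U f \<longleftrightarrow> (\<forall>js. set js \<subseteq> {..<2*n} \<longrightarrow>
      continuous_on U (iter_pd js f) \<and>
      (\<forall>j<2*n. \<forall>x\<in>U. (\<lambda>t. iter_pd js f (x(j := x j + t))) differentiable (at 0)))"

definition smooth_form :: "nat \<Rightarrow> nat \<Rightarrow> dform \<Rightarrow> bool" where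
  "smooth_form n k B \<longleftrightarrow> (\<forall>x. is_alg_form n k (B x)) \<and>
      (\<forall>I. smooth_on n (unit_disk n) (\<lambda>x. B x I))"

text \<open>exterior derivative: d(f dx^I) = sum_j (d_j f) dx^j wedge dx^I\<close>
definition ext_d :: "nat \<Rightarrow> dform \<Rightarrow> dform" where
  "ext_d n B = (\<lambda>x K. if K \<subseteq> {..<2*n} then
       (\<Sum>j\<in>K. (-1) ^ card {i\<in>K - {j}. i < j} * pd j (\<lambda>y. B y (K - {j})) x) else 0)"

definition Pforms :: "nat \<Rightarrow> nat \<Rightarrow> dform set" where
  "Pforms n k = {B. k \<le> n \<and> smooth_form n k B \<and>
      (\<forall>x\<in>unit_disk n. Lambda n (B x) = zero_form)}"

text \<open>partial_minus B = B^1_(s-1), where dB = B^0_(s+1) + omega wedge B^1_(s-1), both primitive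
  (decomposition taken pointwise on U); for s = 0 it is 0.\<close>
definition partial_minus :: "nat \<Rightarrow> nat \<Rightarrow> dform \<Rightarrow> point \<Rightarrow> alg_form" where
  "partial_minus n s B x = (if s = 0 then zero_form else
     (THE c. is_alg_form n (s - 1) c \<and> Lambda n c = zero_form \<and>
        (\<exists>a. is_alg_form n (s + 1) a \<and> Lambda n a = zero_form \<and>
             ext_d n B x = (\<lambda>K. a K + Lop n c K))))"

definition Pprime :: "nat \<Rightarrow> nat \<Rightarrow> dform set" where
  "Pprime n k = {B \<in> Pforms n k. \<forall>x\<in>unit_disk n. partial_minus n k B x = zero_form}"

end

theory Submission
  imports Defs
begin
definition sg :: "nat \<Rightarrow> nat set \<Rightarrow> real" where
  "sg i J = (-1) ^ card {l\<in>J. l < i}"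

lemma zero_form_app[simp]: "zero_form J = 0"
  by (simp add: zero_form_def)

lemma sg_sq[simp]: "sg i J * sg i J = 1"
  by (simp add: sg_def flip: power_add)

lemma fin_less[simp]: "finite {l\<in>J. l < (i::nat)}"
  by (rule finite_subset[of _ "{..<i}"]) auto

lemma card_less_insert:
  assumes "a \<notin> J"
  shows "card {l\<in>insert a J. l < i} = card {l\<in>J. l < (i::nat)} + (if a < i then 1 else 0)"
proof (cases "a < i")
  case True
  then have "{l\<in>insert a J. l < i} = insert a {l\<in>J. l < i}" by auto
  then show ?thesis using assms True by simp
next
  case False
  then have "{l\<in>insert a J. l < i} = {l\<in>J. l < i}" by auto
  then show ?thesis using False by simp
qed

lemma sg_insert: "a \<notin> J \<Longrightarrow> sg i (insert a J) = (if a < i then - sg i J else sg i J)"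
  using card_less_insert[of a J i] by (auto simp: sg_def)

lemma interior_alt: "interior j a J = (if j \<in> J then 0 else sg j J * a (insert j J))"
  by (simp add: interior_def sg_def)

lemma interior_anticomm: "interior p (interior q a) J = - interior q (interior p a) J"
proof (cases "p = q")
  case True then show ?thesis by (simp add: interior_alt)
next
  case False
  show ?thesis
  proof (cases "p \<in> J \<or> q \<in> J")
    case True then show ?thesis using False by (auto simp: interior_alt)
  next
    case nin: False
    have e: "insert q (insert p J) = insert p (insert q J)" by auto
    show ?thesis using nin False
      by (auto simp: interior_alt sg_insert e)
  qed
qed

lemma interior_anticomm_fun: "interior p (interior q a) = (\<lambda>J. - interior q (interior p a) J)"
  using interior_anticomm by blast

lemma interior_lin:
  "interior j (\<lambda>L. c * f L) J = c * interior j f J"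
  "interior j (\<lambda>L. f L + g L) J = interior j f J + interior j g J"
  "interior j (\<lambda>L. f L - g L) J = interior j f J - interior j g J"
  "interior j (\<lambda>L. - f L) J = - interior j f J"
  "interior j (\<lambda>L. \<Sum>i\<in>A. F i L) J = (\<Sum>i\<in>A. interior j (F i) J)"
  "interior j zero_form J = 0"
  "interior j (\<lambda>L. 0) J = 0"
  by (auto simp: interior_alt zero_form_def sum_distrib_left algebra_simps)

lemma interior_linf:
  "interior j (\<lambda>L. c * f L) = (\<lambda>J. c * interior j f J)"
  "interior j (\<lambda>L. f L + g L) = (\<lambda>J. interior j f J + interior j g J)"
  "interior j (\<lambda>L. f L - g L) = (\<lambda>J. interior j f J - interior j g J)"
  "interior j (\<lambda>L. - f L) = (\<lambda>J. - interior j f J)"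
  "interior j (\<lambda>L. \<Sum>i\<in>A. F i L) = (\<lambda>J. \<Sum>i\<in>A. interior j (F i) J)"
  "interior j zero_form = zero_form"
  "interior j (\<lambda>L. 0) = zero_form"
  by (auto simp: interior_lin zero_form_def)

lemma omega_inv_sum:
  fixes T :: "nat \<Rightarrow> nat \<Rightarrow> real"
  shows "(\<Sum>i<2*n. \<Sum>j<2*n. omega_inv n i j * T i j) = (\<Sum>m<n. T (m+n) m - T m (m+n))"
proof -
  have split: "{..<2*n} = {..<n} \<union> {n..<2*n}" by auto
  have inner1: "(\<Sum>j<2*n. omega_inv n i j * T i j) = - T i (i+n)" if "i < n" for i
  proof -
    have "(\<Sum>j<2*n. omega_inv n i j * T i j) = (\<Sum>j<2*n. if j = i+n then - T i j else 0)"
      using that by (intro sum.cong) (auto simp: omega_inv_def)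
    also have "\<dots> = - T i (i+n)" using that by (simp add: sum.delta')
    finally show ?thesis .
  qed
  have inner2: "(\<Sum>j<2*n. omega_inv n i j * T i j) = T i (i-n)" if "n \<le> i" "i < 2*n" for i
  proof -
    have "(\<Sum>j<2*n. omega_inv n i j * T i j) = (\<Sum>j<2*n. if j = i-n then T i j else 0)"
      using that by (intro sum.cong) (auto simp: omega_inv_def)
    also have "\<dots> = T i (i-n)" using that by (simp add: sum.delta')
    finally show ?thesis .
  qed
  have "(\<Sum>i<2*n. \<Sum>j<2*n. omega_inv n i j * T i j)
      = (\<Sum>i<n. \<Sum>j<2*n. omega_inv n i j * T i j) + (\<Sum>i\<in>{n..<2*n}. \<Sum>j<2*n. omega_inv n i j * T i j)"
    unfolding split by (rule sum.union_disjoint) auto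
  also have "(\<Sum>i<n. \<Sum>j<2*n. omega_inv n i j * T i j) = (\<Sum>i<n. - T i (i+n))"
    by (rule sum.cong) (auto simp: inner1)
  also have "(\<Sum>i\<in>{n..<2*n}. \<Sum>j<2*n. omega_inv n i j * T i j) = (\<Sum>i\<in>{n..<2*n}. T i (i-n))"
    by (rule sum.cong) (auto simp: inner2)
  also have "\<dots> = (\<Sum>m<n. T (m+n) m)"
  proof -
    have "{n..<2*n} = {0+n..<n+n}" by (simp add: mult_2)
    then have "(\<Sum>i\<in>{n..<2*n}. T i (i-n)) = (\<Sum>i\<in>{0..<n}. T (i+n) (i+n-n))"
      by (simp only: sum.shift_bounds_nat_ivl)
    then show ?thesis by (simp add: atLeast0LessThan)
  qed
  finally show ?thesis by (simp add: sum_subtractf sum_negf)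
qed

lemma Lambda_alt: "Lambda n a J = - (\<Sum>m<n. interior m (interior (m+n) a) J)"
proof -
  have "Lambda n a J = (1/2) * (\<Sum>m<n. interior (m+n) (interior m a) J - interior m (interior (m+n) a) J)"
    unfolding Lambda_def by (subst omega_inv_sum) simp
  also have "\<dots> = (1/2) * (\<Sum>m<n. - 2 * interior m (interior (m+n) a) J)"
    by (intro arg_cong[where f="\<lambda>x. (1/2) * x"] sum.cong refl) (subst interior_anticomm, simp)
  finally show ?thesis by (simp add: sum_negf flip: sum_distrib_left)
qed

lemma Lambda_lin:
  "Lambda n (\<lambda>L. c * f L) J = c * Lambda n f J"
  "Lambda n (\<lambda>L. f L + g L) J = Lambda n f J + Lambda n g J"
  "Lambda n (\<lambda>L. f L - g L) J = Lambda n f J - Lambda n g J"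
  "Lambda n (\<lambda>L. \<Sum>i\<in>A. F i L) J = (\<Sum>i\<in>A. Lambda n (F i) J)"
  "Lambda n zero_form J = 0"
  by (simp_all add: Lambda_alt interior_linf(1-6) interior_lin sum_distrib_left sum_negf
       sum_subtractf sum.distrib) (subst sum.swap, simp add: sum_negf)

lemma interior_triple: "interior m (interior p (interior i b)) J = interior i (interior m (interior p b)) J"
proof -
  have e1: "interior p (interior i b) = (\<lambda>L. - interior i (interior p b) L)"
    by (rule ext, rule interior_anticomm)
  have "interior m (interior p (interior i b)) J = - interior m (interior i (interior p b)) J"
    by (simp only: e1 interior_lin)
  also have "\<dots> = interior i (interior m (interior p b)) J"
    using interior_anticomm[of m i "interior p b" J] by simp
  finally show ?thesis .
qed

lemma Lambda_interior: "Lambda n (interior i b) J = interior i (Lambda n b) J"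
proof -
  have e: "\<And>m. interior m (interior (m+n) (interior i b)) J = interior i (interior m (interior (m+n) b)) J"
    by (rule interior_triple)
  show ?thesis unfolding Lambda_alt interior_linf(1-6) interior_lin by (simp only: e)
qed

definition SS :: "nat \<Rightarrow> nat \<Rightarrow> nat set \<Rightarrow> real" where
  "SS n m J = sg m J * sg (m+n) J"

lemma SS_sq[simp]: "SS n m J * SS n m J = 1"
proof -
  have "SS n m J * SS n m J = (sg m J * sg m J) * (sg (m+n) J * sg (m+n) J)"
    by (simp add: SS_def algebra_simps)
  then show ?thesis by simp
qed

lemma Lambda_set:
  assumes "0 < n"
  shows "Lambda n a J = (\<Sum>m<n. if m \<notin> J \<and> m+n \<notin> J
            then SS n m J * a (insert m (insert (m+n) J)) else 0)"
  unfolding Lambda_alt sum_negf[symmetric]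
proof (rule sum.cong[OF refl])
  fix m assume "m \<in> {..<n}"
  have e: "insert (m+n) (insert m J) = insert m (insert (m+n) J)" by auto
  show "- interior m (interior (m+n) a) J = (if m \<notin> J \<and> m+n \<notin> J
            then SS n m J * a (insert m (insert (m+n) J)) else 0)"
    using assms by (auto simp: interior_alt sg_insert e SS_def)
qed

lemma eps_pair:
  assumes "m \<noteq> p"
  shows "eps {m, p} J = sg m J * sg p J"
proof -
  have "{(a,q). a \<in> {m,p} \<and> q \<in> J \<and> q < a} = Pair m ` {q\<in>J. q < m} \<union> Pair p ` {q\<in>J. q < p}"
    by auto
  moreover have "card (Pair m ` {q\<in>J. q < m} \<union> Pair p ` {q\<in>J. q < p})
      = card {q\<in>J. q < m} + card {q\<in>J. q < p}"
    using assms by (subst card_Un_disjoint) (auto simp: card_image inj_on_def)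
  ultimately show ?thesis by (simp add: eps_def sg_def power_add)
qed

lemma alg_form_finite: "is_alg_form n d a \<Longrightarrow> a I \<noteq> 0 \<Longrightarrow> finite I \<and> I \<subseteq> {..<2*n} \<and> card I = d"
  unfolding is_alg_form_def by (meson finite_lessThan finite_subset)

lemma Lop_set:
  assumes "0 < n" and a: "is_alg_form n d a"
  shows "Lop n a K = (\<Sum>m<n. if m \<in> K \<and> m+n \<in> K
            then SS n m (K - {m, m+n}) * a (K - {m, m+n}) else 0)"
proof (cases "finite K")
  case False
  have "Lop n a K = 0" using False by (simp add: Lop_def wedge_def)
  moreover have "(\<Sum>m<n. if m \<in> K \<and> m+n \<in> K
            then SS n m (K - {m, m+n}) * a (K - {m, m+n}) else 0) = 0"
  proof (rule sum.neutral, clarify)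
    fix m assume "m < n"
    have "infinite (K - {m, m+n})" using False by auto
    then have "a (K - {m, m+n}) = 0" using alg_form_finite[OF a] by blast
    then show "(if m \<in> K \<and> m+n \<in> K then SS n m (K - {m, m+n}) * a (K - {m, m+n}) else 0) = 0"
      by simp
  qed
  ultimately show ?thesis by simp
next
  case fin: True
  define M where "M = {m. m < n \<and> m \<in> K \<and> m+n \<in> K}"
  define f where "f = (\<lambda>I. eps I (K - I) * a (K - I))"
  have "Lop n a K = (\<Sum>I\<in>Pow K. eps I (K - I) * omega n I * a (K - I))"
    by (simp add: Lop_def wedge_def)
  also have "\<dots> = (\<Sum>I\<in>(\<lambda>m. {m, m+n}) ` M. f I)"
  proof (rule sum.mono_neutral_cong_right)
    show "finite (Pow K)" using fin by simp
    show "(\<lambda>m. {m, m+n}) ` M \<subseteq> Pow K" by (auto simp: M_def)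
    show "\<forall>I\<in>Pow K - (\<lambda>m. {m, m+n}) ` M. eps I (K - I) * omega n I * a (K - I) = 0"
    proof
      fix I assume that: "I \<in> Pow K - (\<lambda>m. {m, m+n}) ` M"
      have "omega n I = 0"
      proof (rule ccontr)
        assume "omega n I \<noteq> 0"
        then obtain i where "i < n" "I = {i, i+n}" by (auto simp: omega_def split: if_splits)
        then show False using that by (auto simp: M_def)
      qed
      then show "eps I (K - I) * omega n I * a (K - I) = 0" by simp
    qed
    show "eps I (K - I) * omega n I * a (K - I) = f I" if "I \<in> (\<lambda>m. {m, m+n}) ` M" for I
      using that by (auto simp: f_def omega_def M_def)
  qed
  also have "\<dots> = (\<Sum>m\<in>M. f {m, m+n})"
  proof (rule sum.reindex[unfolded comp_def])
    show "inj_on (\<lambda>m. {m, m+n}) M"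
    proof (rule inj_onI)
      fix x y assume xy: "x \<in> M" "y \<in> M" "{x, x+n} = {y, y+n}"
      then have "x \<in> {y, y+n}" by blast
      then show "x = y" using xy by (auto simp: M_def)
    qed
  qed
  also have "\<dots> = (\<Sum>m<n. if m \<in> K \<and> m+n \<in> K
            then SS n m (K - {m, m+n}) * a (K - {m, m+n}) else 0)"
  proof -
    have Meq: "M = {m \<in> {..<n}. m \<in> K \<and> m+n \<in> K}" by (auto simp: M_def)
    have "(\<Sum>m\<in>M. f {m, m+n}) = (\<Sum>m<n. if m \<in> K \<and> m+n \<in> K then f {m, m+n} else 0)"
      unfolding Meq by (rule sum.inter_filter) simp
    also have "\<dots> = (\<Sum>m<n. if m \<in> K \<and> m+n \<in> K
            then SS n m (K - {m, m+n}) * a (K - {m, m+n}) else 0)"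
      using assms(1) by (intro sum.cong refl) (auto simp: f_def eps_pair SS_def)
    finally show ?thesis .
  qed
  finally show ?thesis .
qed

lemma count_lemma:
  assumes sub: "J \<subseteq> {..<2*n}" and cJ: "card J + 2 \<le> n"
  shows "card {m. m<n \<and> m\<in>J \<and> m+n\<in>J} + 2 \<le> card {m. m<n \<and> m\<notin>J \<and> m+n\<notin>J}"
proof -
  define X where "X = {m. m<n \<and> m\<in>J}"
  define Y where "Y = {m. m<n \<and> m+n\<in>J}"
  have finX: "finite X" and finY: "finite Y" by (auto simp: X_def Y_def)
  have e1: "J \<inter> {..<n} = X" by (auto simp: X_def)
  have e2: "J \<inter> {n..<2*n} = (\<lambda>m. m+n) ` Y"
  proof
    show "J \<inter> {n..<2*n} \<subseteq> (\<lambda>m. m+n) ` Y"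
    proof
      fix i assume i: "i \<in> J \<inter> {n..<2*n}"
      then have "i = (i - n) + n" "i - n \<in> Y" by (auto simp: Y_def)
      then show "i \<in> (\<lambda>m. m+n) ` Y" by (metis image_eqI)
    qed
    show "(\<lambda>m. m+n) ` Y \<subseteq> J \<inter> {n..<2*n}" by (auto simp: Y_def)
  qed
  have "J = (J \<inter> {..<n}) \<union> (J \<inter> {n..<2*n})" using sub by auto
  moreover have "card ((J \<inter> {..<n}) \<union> (J \<inter> {n..<2*n})) = card (J \<inter> {..<n}) + card (J \<inter> {n..<2*n})"
    by (rule card_Un_disjoint) auto
  ultimately have "card J = card (J \<inter> {..<n}) + card (J \<inter> {n..<2*n})" by simp
  also have "\<dots> = card X + card Y" unfolding e1 e2 by (simp add: card_image inj_on_def)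
  finally have cJ': "card J = card X + card Y" .
  have cu: "card (X \<union> Y) + card (X \<inter> Y) = card X + card Y"
    using card_Un_Int[OF finX finY] by simp
  have eQ: "{m. m<n \<and> m\<in>J \<and> m+n\<in>J} = X \<inter> Y" by (auto simp: X_def Y_def)
  have eP: "{m. m<n \<and> m\<notin>J \<and> m+n\<notin>J} = {..<n} - (X \<union> Y)" by (auto simp: X_def Y_def)
  have "X \<union> Y \<subseteq> {..<n}" by (auto simp: X_def Y_def)
  then have cP: "card ({..<n} - (X \<union> Y)) = n - card (X \<union> Y)"
    using card_Diff_subset[of "X \<union> Y" "{..<n}"] finX finY by simp
  have "card (X \<union> Y) \<le> n" using \<open>X \<union> Y \<subseteq> {..<n}\<close> by (metis card_lessThan card_mono finite_lessThan)
  then show ?thesis unfolding eQ eP cP using cu cJ' cJ by linarith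
qed

lemma sign_swap:
  assumes n: "0 < n" and m: "m < n" "m' < n" "m \<noteq> m'"
    and J0: "m \<notin> J0" "m+n \<notin> J0" "m' \<notin> J0" "m'+n \<notin> J0"
  shows "SS n m (insert m' (insert (m'+n) J0)) * SS n m' (insert m (insert (m+n) J0)) = SS n m' J0 * SS n m J0"
proof -
  have a1: "m' \<notin> insert (m'+n) J0" "m \<notin> insert (m+n) J0" using J0 n by auto
  show ?thesis
    using m n J0 a1 by (cases "m < m'") (auto simp: SS_def sg_insert)
qed

lemma prim_unique:
  assumes n: "0 < n" and c: "is_alg_form n d c" and dn: "d + 2 \<le> n"
    and l1: "\<And>J. Lambda n c J = 0" and l2: "\<And>J. Lambda n (Lop n c) J = 0"
  shows "c J = 0"
proof (rule ccontr)
  assume cJ: "c J \<noteq> 0"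
  then have fin: "finite J" and sub: "J \<subseteq> {..<2*n}" and card: "card J = d"
    using alg_form_finite[OF c] by auto
  define P where "P m \<longleftrightarrow> m \<notin> J \<and> m+n \<notin> J" for m
  define Q where "Q m \<longleftrightarrow> m \<in> J \<and> m+n \<in> J" for m
  define Jp where "Jp m = insert m (insert (m+n) J)" for m
  define Jm where "Jm m = J - {m, m+n}" for m
  define F where "F m m' = (if P m \<and> Q m' \<and> m' \<noteq> m then SS n m J * SS n m' (Jp m - {m', m'+n}) * c (Jp m - {m', m'+n}) else 0)" for m m'
  define G where "G m' m = (if Q m' \<and> P m \<and> m \<noteq> m' then SS n m' (Jm m') * SS n m (Jm m') * c (insert m (insert (m+n) (Jm m'))) else 0)" for m' m
  have cnt: "(\<Sum>m<n. if R m then c J else 0) = real (card {m. m<n \<and> R m}) * c J" for R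
  proof -
    have "{m. m<n \<and> R m} = {m\<in>{..<n}. R m}" by auto
    then show ?thesis by (simp add: sum.inter_filter[symmetric])
  qed
  have step1: "Lambda n (Lop n c) J = real (card {m. m<n \<and> P m}) * c J + (\<Sum>m<n. \<Sum>m'<n. F m m')"
  proof -
    have "Lambda n (Lop n c) J = (\<Sum>m<n. if P m then SS n m J * Lop n c (Jp m) else 0)"
      unfolding Lambda_set[OF n] P_def Jp_def by simp
    also have "\<dots> = (\<Sum>m<n. (if P m then c J else 0) + (\<Sum>m'<n. F m m'))"
    proof (rule sum.cong[OF refl])
      fix m assume m: "m \<in> {..<n}"
      show "(if P m then SS n m J * Lop n c (Jp m) else 0) = (if P m then c J else 0) + (\<Sum>m'<n. F m m')"
      proof (cases "P m")
        case False then show ?thesis by (simp add: F_def)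
      next
        case True
        define h where "h m' = (if m' \<in> Jp m \<and> m'+n \<in> Jp m then SS n m' (Jp m - {m', m'+n}) * c (Jp m - {m', m'+n}) else 0)" for m'
        have JpJ: "Jp m - {m, m+n} = J" using True by (auto simp: Jp_def P_def)
        have "Lop n c (Jp m) = (\<Sum>m'<n. h m')" unfolding h_def by (rule Lop_set[OF n c])
        also have "\<dots> = h m + (\<Sum>m'\<in>{..<n}-{m}. h m')"
          using m by (simp add: sum.remove)
        also have "h m = SS n m J * c J" using JpJ by (simp add: h_def Jp_def)
        also have "(\<Sum>m'\<in>{..<n}-{m}. h m') = (\<Sum>m'<n. if m' \<noteq> m then h m' else 0)"
        proof -
          have eqq: "{..<n}-{m} = {m'\<in>{..<n}. m' \<noteq> m}" by auto
          show ?thesis unfolding eqq by (rule sum.inter_filter) simp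
        qed
        also have "\<dots> = (\<Sum>m'<n. if Q m' \<and> m' \<noteq> m then SS n m' (Jp m - {m', m'+n}) * c (Jp m - {m', m'+n}) else 0)"
        proof (rule sum.cong[OF refl])
          fix m' assume m': "m' \<in> {..<n}"
          show "(if m' \<noteq> m then h m' else 0) = (if Q m' \<and> m' \<noteq> m then SS n m' (Jp m - {m', m'+n}) * c (Jp m - {m', m'+n}) else 0)"
          proof (cases "m' = m")
            case False
            have "m' \<in> Jp m \<and> m'+n \<in> Jp m \<longleftrightarrow> Q m'"
              using False m m' by (auto simp: Jp_def Q_def)
            then show ?thesis using False by (simp add: h_def)
          qed simp
        qed
        finally have "Lop n c (Jp m) = SS n m J * c J + (\<Sum>m'<n. if Q m' \<and> m' \<noteq> m then SS n m' (Jp m - {m', m'+n}) * c (Jp m - {m', m'+n}) else 0)" .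
        then have "SS n m J * Lop n c (Jp m) = (SS n m J * SS n m J) * c J + (\<Sum>m'<n. F m m')"
          using True by (simp add: F_def sum_distrib_left algebra_simps if_distrib cong: if_cong)
        then show ?thesis using True by simp
      qed
    qed
    also have "\<dots> = real (card {m. m<n \<and> P m}) * c J + (\<Sum>m<n. \<Sum>m'<n. F m m')"
      by (simp add: sum.distrib cnt)
    finally show ?thesis .
  qed
  have step2: "0 = real (card {m. m<n \<and> Q m}) * c J + (\<Sum>m'<n. \<Sum>m<n. G m' m)"
  proof -
    have "0 = (\<Sum>m'<n. if Q m' then SS n m' (Jm m') * Lambda n c (Jm m') else 0)"
      by (rule sym, rule sum.neutral) (use l1 in auto)
    also have "\<dots> = (\<Sum>m'<n. (if Q m' then c J else 0) + (\<Sum>m<n. G m' m))"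
    proof (rule sum.cong[OF refl])
      fix m' assume m': "m' \<in> {..<n}"
      show "(if Q m' then SS n m' (Jm m') * Lambda n c (Jm m') else 0) = (if Q m' then c J else 0) + (\<Sum>m<n. G m' m)"
      proof (cases "Q m'")
        case False then show ?thesis by (simp add: G_def)
      next
        case True
        define h where "h m = (if m \<notin> Jm m' \<and> m+n \<notin> Jm m' then SS n m (Jm m') * c (insert m (insert (m+n) (Jm m'))) else 0)" for m
        have JmJ: "insert m' (insert (m'+n) (Jm m')) = J" using True by (auto simp: Jm_def Q_def)
        have "Lambda n c (Jm m') = (\<Sum>m<n. h m)" unfolding h_def by (rule Lambda_set[OF n])
        also have "\<dots> = h m' + (\<Sum>m\<in>{..<n}-{m'}. h m)"
          using m' by (simp add: sum.remove)
        also have "h m' = SS n m' (Jm m') * c J" using JmJ by (simp add: h_def Jm_def)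
        also have "(\<Sum>m\<in>{..<n}-{m'}. h m) = (\<Sum>m<n. if m \<noteq> m' then h m else 0)"
        proof -
          have eqq: "{..<n}-{m'} = {m\<in>{..<n}. m \<noteq> m'}" by auto
          show ?thesis unfolding eqq by (rule sum.inter_filter) simp
        qed
        also have "\<dots> = (\<Sum>m<n. if P m \<and> m \<noteq> m' then SS n m (Jm m') * c (insert m (insert (m+n) (Jm m'))) else 0)"
        proof (rule sum.cong[OF refl])
          fix m assume m: "m \<in> {..<n}"
          show "(if m \<noteq> m' then h m else 0) = (if P m \<and> m \<noteq> m' then SS n m (Jm m') * c (insert m (insert (m+n) (Jm m'))) else 0)"
          proof (cases "m = m'")
            case False
            have "m \<notin> Jm m' \<and> m+n \<notin> Jm m' \<longleftrightarrow> P m"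
              using False m m' by (auto simp: Jm_def P_def)
            then show ?thesis using False by (simp add: h_def)
          qed simp
        qed
        finally have "Lambda n c (Jm m') = SS n m' (Jm m') * c J + (\<Sum>m<n. if P m \<and> m \<noteq> m' then SS n m (Jm m') * c (insert m (insert (m+n) (Jm m'))) else 0)" .
        then have "SS n m' (Jm m') * Lambda n c (Jm m') = (SS n m' (Jm m') * SS n m' (Jm m')) * c J + (\<Sum>m<n. G m' m)"
          using True by (simp add: G_def sum_distrib_left algebra_simps if_distrib cong: if_cong)
        then show ?thesis using True by simp
      qed
    qed
    also have "\<dots> = real (card {m. m<n \<and> Q m}) * c J + (\<Sum>m'<n. \<Sum>m<n. G m' m)"
      by (simp add: sum.distrib cnt)
    finally show ?thesis .
  qed
  have FG: "F m m' = G m' m" if "m < n" "m' < n" for m m'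
  proof (cases "P m \<and> Q m' \<and> m' \<noteq> m")
    case False then show ?thesis by (auto simp: F_def G_def)
  next
    case True
    have J0: "m \<notin> Jm m'" "m+n \<notin> Jm m'" "m' \<notin> Jm m'" "m'+n \<notin> Jm m'"
      using True by (auto simp: Jm_def P_def)
    have JJ: "J = insert m' (insert (m'+n) (Jm m'))" using True by (auto simp: Jm_def Q_def)
    have Jpm: "Jp m - {m', m'+n} = insert m (insert (m+n) (Jm m'))"
      using True that by (auto simp: Jp_def Jm_def P_def Q_def)
    have "SS n m J * SS n m' (Jp m - {m', m'+n}) = SS n m' (Jm m') * SS n m (Jm m')"
      unfolding Jpm by (subst JJ, rule sign_swap[OF n that]) (use True J0 in auto)
    then show ?thesis using True by (simp add: F_def G_def Jpm)
  qed
  have "(\<Sum>m<n. \<Sum>m'<n. F m m') = (\<Sum>m'<n. \<Sum>m<n. G m' m)"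
    by (subst sum.swap) (intro sum.cong refl, simp add: FG)
  then have "real (card {m. m<n \<and> P m}) * c J = real (card {m. m<n \<and> Q m}) * c J"
    using step1 step2 l2[of J] by linarith
  then have "card {m. m<n \<and> P m} = card {m. m<n \<and> Q m}" using cJ by simp
  moreover have "card {m. m<n \<and> Q m} + 2 \<le> card {m. m<n \<and> P m}"
    using count_lemma[OF sub] card dn unfolding P_def Q_def by simp
  ultimately show False by simp
qed

lemma U_iff: "x \<in> unit_disk n \<longleftrightarrow> (\<forall>i\<ge>2*n. x i = 0) \<and> L2_set x {..<2*n} < 1"
  by (simp add: unit_disk_def L2_set_def)

lemma U_perturb:
  assumes x: "x \<in> unit_disk n" and w0: "\<forall>i\<ge>2*n. w i = 0"
    and w: "L2_set w {..<2*n} < 1 - L2_set x {..<2*n}"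
  shows "(\<lambda>i. x i + w i) \<in> unit_disk n"
proof -
  have "L2_set (\<lambda>i. x i + w i) {..<2*n} \<le> L2_set x {..<2*n} + L2_set w {..<2*n}"
    by (rule L2_set_triangle_ineq)
  then show ?thesis using x w0 w by (auto simp: U_iff)
qed

lemma U_scale:
  assumes x: "x \<in> unit_disk n" and t: "0 \<le> t" "t \<le> 1"
  shows "(\<lambda>i. t * x i) \<in> unit_disk n"
proof -
  have "(\<Sum>i<2*n. (t * x i)^2) = t^2 * (\<Sum>i<2*n. (x i)^2)"
    by (simp add: power_mult_distrib sum_distrib_left)
  also have "\<dots> \<le> 1 * (\<Sum>i<2*n. (x i)^2)"
    using t by (intro mult_right_mono) (auto simp: power_le_one sum_nonneg)
  finally show ?thesis using x by (auto simp: unit_disk_def)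
qed

lemma L2_set_delta: "j < (N::nat) \<Longrightarrow> L2_set (\<lambda>i. if i = j then s else 0) {..<N} = \<bar>s\<bar>"
proof -
  assume j: "j < N"
  have "(\<Sum>i<N. (if i = j then s else 0)^2) = (\<Sum>i<N. if i = j then s^2 else 0)"
    by (intro sum.cong) auto
  also have "\<dots> = s^2" using j by simp
  finally show ?thesis by (simp add: L2_set_def)
qed

lemma U_line:
  assumes x: "x \<in> unit_disk n" and j: "j < 2*n"
  obtains d where "d > 0" "\<And>s. \<bar>s\<bar> < d \<Longrightarrow> x(j := x j + s) \<in> unit_disk n"
proof
  show "1 - L2_set x {..<2*n} > 0" using x by (simp add: U_iff)
  fix s :: real assume s: "\<bar>s\<bar> < 1 - L2_set x {..<2*n}"
  have "(\<lambda>i. x i + (if i = j then s else 0)) \<in> unit_disk n"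
    using j s by (intro U_perturb[OF x]) (auto simp: L2_set_delta)
  moreover have "(\<lambda>i. x i + (if i = j then s else 0)) = x(j := x j + s)" by auto
  ultimately show "x(j := x j + s) \<in> unit_disk n" by simp
qed

lemma iter_pd_Nil[simp]: "iter_pd [] f = f" by (simp add: iter_pd_def)
lemma iter_pd_Cons: "iter_pd (j#js) f = iter_pd js (pd j f)" by (simp add: iter_pd_def)
lemma iter_pd_snoc: "iter_pd (js@[j]) f = pd j (iter_pd js f)" by (simp add: iter_pd_def)

lemma smooth_cont: "smooth_on n U f \<Longrightarrow> continuous_on U f"
proof -
  assume "smooth_on n U f"
  then have "continuous_on U (iter_pd [] f)" unfolding smooth_on_def by (metis empty_set empty_subsetI)
  then show ?thesis by simp
qed

lemma smooth_D:
  assumes "smooth_on n U f" "z \<in> U" "j < 2*n"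
  shows "((\<lambda>t. f (z(j := z j + t))) has_real_derivative pd j f z) (at 0)"
proof -
  have "\<forall>j<2*n. \<forall>x\<in>U. (\<lambda>t. iter_pd [] f (x(j := x j + t))) differentiable (at 0)"
    using assms(1) unfolding smooth_on_def by (metis empty_set empty_subsetI)
  then have "(\<lambda>t. f (z(j := z j + t))) differentiable (at 0)"
    using assms(2,3) by simp
  then show ?thesis unfolding pd_def by (simp add: DERIV_deriv_iff_real_differentiable)
qed

lemma smooth_pd:
  assumes "smooth_on n U f" "j < 2*n"
  shows "smooth_on n U (pd j f)"
  unfolding smooth_on_def
proof (intro allI impI)
  fix js assume js: "set js \<subseteq> {..<2*n}"
  then have "set (j#js) \<subseteq> {..<2*n}" using assms(2) by auto
  then have "continuous_on U (iter_pd (j#js) f) \<and> (\<forall>i<2*n. \<forall>x\<in>U. (\<lambda>t. iter_pd (j#js) f (x(i := x i + t))) differentiable at 0)"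
    using assms(1) unfolding smooth_on_def by blast
  then show "continuous_on U (iter_pd js (pd j f)) \<and> (\<forall>i<2*n. \<forall>x\<in>U. (\<lambda>t. iter_pd js (pd j f) (x(i := x i + t))) differentiable at 0)"
    by (simp add: iter_pd_Cons)
qed

lemma pd_cont: "smooth_on n U f \<Longrightarrow> j < 2*n \<Longrightarrow> continuous_on U (pd j f)"
  by (rule smooth_cont, rule smooth_pd)

lemma pd_eqI: "((\<lambda>s. f (x(j := x j + s))) has_real_derivative D) (at 0) \<Longrightarrow> pd j f x = D"
  unfolding pd_def by (rule DERIV_imp_deriv)

lemma pd_local:
  assumes fg: "\<forall>y\<in>unit_disk n. f y = g y" and x: "x \<in> unit_disk n" and j: "j < 2*n"
  shows "pd j f x = pd j g x"
proof -
  obtain d where d: "d > 0" "\<And>s. \<bar>s\<bar> < d \<Longrightarrow> x(j := x j + s) \<in> unit_disk n"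
    using U_line[OF x j] by blast
  have "\<forall>\<^sub>F s in nhds 0. f (x(j := x j + s)) = g (x(j := x j + s))"
    unfolding eventually_nhds_metric using d fg by (auto simp: dist_real_def)
  then show ?thesis unfolding pd_def by (rule deriv_cong_ev) simp
qed

lemma pd_const[simp]: "pd j (\<lambda>y. c) x = 0"
  unfolding pd_def by simp

definition Ig :: "nat \<Rightarrow> (point \<Rightarrow> real) \<Rightarrow> point \<Rightarrow> real" where
  "Ig m h x = integral {0..1} (\<lambda>t. t^m * h (\<lambda>i. t * x i))"

lemma cont_fst_coord: "continuous_on S (\<lambda>p. fst p i)"
  for S :: "(point \<times> 'b::topological_space) set"
proof -
  have "continuous_on S ((\<lambda>y. y i) \<circ> fst)"
    by (rule continuous_on_compose[OF continuous_on_fst[OF continuous_on_id]])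
       (rule continuous_on_subset[OF continuous_on_product_coordinates], simp)
  then show ?thesis by (simp add: comp_def)
qed

lemma cont_coord: "continuous_on S (\<lambda>y. y i)"
  for S :: "point set"
  by (rule continuous_on_subset[OF continuous_on_product_coordinates], simp)

lemma cont_scale_map: "continuous_on S (\<lambda>p. \<lambda>i. snd p * fst p i)"
  for S :: "(point \<times> real) set"
proof (rule continuous_on_coordinatewise_then_product)
  fix i show "continuous_on S (\<lambda>p. snd p * fst p i)"
    by (rule continuous_on_mult[OF continuous_on_snd[OF continuous_on_id] cont_fst_coord])
qed

lemma Ig_cont:
  assumes h: "continuous_on (unit_disk n) h"
  shows "continuous_on (unit_disk n) (Ig m h)"
proof -
  have c1: "continuous_on (unit_disk n \<times> cbox 0 1) (\<lambda>p. h (\<lambda>i. snd p * fst p i))"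
    by (rule continuous_on_compose2[OF h cont_scale_map]) (auto intro: U_scale)
  have "continuous_on (unit_disk n \<times> cbox 0 1) (\<lambda>(x, t). t^m * h (\<lambda>i. t * x i))"
    unfolding split_beta by (intro continuous_intros c1)
  from integral_continuous_on_param[OF this]
  show ?thesis unfolding Ig_def by simp
qed

lemma Ig_integrable:
  assumes h: "continuous_on (unit_disk n) h" and x: "x \<in> unit_disk n"
  shows "(\<lambda>t. t^m * h (\<lambda>i. t * x i)) integrable_on {0..1}"
proof -
  have "continuous_on {0..1} (\<lambda>t. (\<lambda>i. t * x i))"
    by (rule continuous_on_coordinatewise_then_product) (intro continuous_intros)
  then have "continuous_on {0..1} (\<lambda>t. h (\<lambda>i. t * x i))"
    by (rule continuous_on_compose2[OF h]) (auto intro: U_scale[OF x])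
  then show ?thesis by (intro integrable_continuous_real continuous_intros)
qed

lemma cbox01: "cbox (0::real) 1 = {0..1}" by (simp add: cbox_interval)

lemma upd_scale_eq:
  fixes t s s' :: real and x :: point
  shows "(\<lambda>i. t * (x(j := x j + s)) i)(j := t * (x(j := x j + s)) j + t * (s' - s)) = (\<lambda>i. t * (x(j := x j + s')) i)"
proof (rule ext)
  fix i show "((\<lambda>i. t * (x(j := x j + s)) i)(j := t * (x(j := x j + s)) j + t * (s' - s))) i = t * (x(j := x j + s')) i"
    by (cases "i = j") (simp_all add: algebra_simps)
qed

lemma Ig_deriv:
  assumes h: "smooth_on n (unit_disk n) h" and x: "x \<in> unit_disk n" and j: "j < 2*n"
  shows "((\<lambda>s. Ig m h (x(j := x j + s))) has_real_derivative Ig (Suc m) (pd j h) x) (at 0)"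
proof -
  obtain d where d: "d > 0" "\<And>s. \<bar>s\<bar> < d \<Longrightarrow> x(j := x j + s) \<in> unit_disk n"
    using U_line[OF x j] by blast
  define S where "S = ball (0::real) d"
  have inS: "s \<in> S \<Longrightarrow> x(j := x j + s) \<in> unit_disk n" for s
    using d by (auto simp: S_def dist_real_def)
  have inU: "s \<in> S \<Longrightarrow> t \<in> {0..1} \<Longrightarrow> (\<lambda>i. t * (x(j := x j + s)) i) \<in> unit_disk n" for s t
    by (rule U_scale[OF inS]) auto
  define f where "f s t = t^m * h (\<lambda>i. t * (x(j := x j + s)) i)" for s t :: real
  define fx where "fx s t = t^(Suc m) * pd j h (\<lambda>i. t * (x(j := x j + s)) i)" for s t :: real
  have hc: "continuous_on (unit_disk n) h" by (rule smooth_cont[OF h])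
  have pc: "continuous_on (unit_disk n) (pd j h)" by (rule pd_cont[OF h j])
  have map_cont: "continuous_on A (\<lambda>p. \<lambda>i. snd p * (x(j := x j + fst p)) i)" for A :: "(real \<times> real) set"
  proof (rule continuous_on_coordinatewise_then_product)
    fix i show "continuous_on A (\<lambda>p. snd p * (x(j := x j + fst p)) i)"
      by (cases "i = j") (simp_all add: continuous_intros)
  qed
  have der: "((\<lambda>s. f s t) has_field_derivative fx s t) (at s within S)"
    if s: "s \<in> S" and t: "t \<in> cbox 0 1" for s t
  proof -
    define z where "z = (\<lambda>i. t * (x(j := x j + s)) i)"
    have zU: "z \<in> unit_disk n" using inU s t by (simp add: z_def cbox01)
    have D0: "((\<lambda>u. h (z(j := z j + u))) has_real_derivative pd j h z) (at (t * (s - s)))"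
      using smooth_D[OF h zU j] by simp
    have D1: "((\<lambda>s'. t * (s' - s)) has_real_derivative t) (at s)"
      by (auto intro!: derivative_eq_intros)
    have "((\<lambda>s'. h (z(j := z j + t * (s' - s)))) has_real_derivative pd j h z * t) (at s)"
      by (rule DERIV_chain2[OF D0 D1])
    moreover have "(\<lambda>s'. h (z(j := z j + t * (s' - s)))) = (\<lambda>s'. h (\<lambda>i. t * (x(j := x j + s')) i))"
      unfolding z_def by (subst upd_scale_eq) (rule refl)
    ultimately have "((\<lambda>s'. h (\<lambda>i. t * (x(j := x j + s')) i)) has_real_derivative pd j h z * t) (at s)"
      by simp
    then have "((\<lambda>s'. t^m * h (\<lambda>i. t * (x(j := x j + s')) i)) has_real_derivative t^m * (pd j h z * t)) (at s)"
      by (rule DERIV_cmult)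
    moreover have e: "t^m * (pd j h z * t) = fx s t" by (simp add: fx_def z_def mult_ac)
    ultimately have "((\<lambda>s'. f s' t) has_real_derivative fx s t) (at s)"
      unfolding f_def by simp
    then show ?thesis by (rule has_field_derivative_at_within)
  qed
  have integ: "f s integrable_on cbox 0 1" if s: "s \<in> S" for s
  proof -
    have "continuous_on {0..1} (\<lambda>t. h (\<lambda>i. t * (x(j := x j + s)) i))"
      by (rule continuous_on_compose2[OF hc, where f="\<lambda>t. \<lambda>i. t * (x(j := x j + s)) i"])
         (use inU s in \<open>auto intro!: continuous_on_coordinatewise_then_product continuous_intros\<close>)
    then show ?thesis unfolding f_def cbox01 by (intro integrable_continuous_real continuous_intros)
  qed
  have cfx: "continuous_on (S \<times> cbox 0 1) (\<lambda>(s, t). fx s t)"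
  proof -
    have "continuous_on (S \<times> cbox 0 1) (\<lambda>p. pd j h (\<lambda>i. snd p * (x(j := x j + fst p)) i))"
      by (rule continuous_on_compose2[OF pc map_cont]) (auto simp: cbox01 simp del: fun_upd_apply intro!: inU)
    then show ?thesis unfolding fx_def split_beta by (intro continuous_intros)
  qed
  have "((\<lambda>s. integral (cbox 0 1) (f s)) has_field_derivative integral (cbox 0 1) (fx 0)) (at 0 within S)"
    by (rule leibniz_rule_field_derivative[OF der integ cfx]) (auto simp: S_def d)
  moreover have eqat: "at (0::real) within S = at 0"
    by (rule at_within_open) (auto simp: S_def d)
  ultimately have "((\<lambda>s. integral (cbox 0 1) (f s)) has_field_derivative integral (cbox 0 1) (fx 0)) (at 0)"
    by simp
  moreover have "(\<lambda>s. integral (cbox 0 1) (f s)) = (\<lambda>s. Ig m h (x(j := x j + s)))"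
    by (rule ext) (simp add: Ig_def cbox01 f_def[abs_def] del: fun_upd_apply)
  moreover have "integral (cbox 0 1) (fx 0) = Ig (Suc m) (pd j h) x"
    by (simp add: Ig_def cbox01 fx_def[abs_def] del: fun_upd_apply)
  ultimately show ?thesis by simp
qed

inductive gd :: "nat \<Rightarrow> (point \<Rightarrow> real) \<Rightarrow> bool" for n where
  gd_base: "smooth_on n (unit_disk n) h \<Longrightarrow> gd n (Ig m h)"
| gd_mul: "gd n F \<Longrightarrow> gd n (\<lambda>x. x i * F x)"
| gd_add: "gd n F \<Longrightarrow> gd n G \<Longrightarrow> gd n (\<lambda>x. F x + G x)"
| gd_cmul: "gd n F \<Longrightarrow> gd n (\<lambda>x. c * F x)"
| gd_zero: "gd n (\<lambda>x. 0)"

lemma deriv_differentiable: "(f has_real_derivative D) (at x) \<Longrightarrow> f differentiable (at x)"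
  using DERIV_deriv_iff_real_differentiable DERIV_imp_deriv by metis

lemma coord_deriv: "((\<lambda>s. (x(j := x j + s)) i) has_real_derivative (if i = j then 1 else 0)) (at 0)"
proof (cases "i = j")
  case True then show ?thesis by (simp, intro derivative_eq_intros) auto
next
  case False then show ?thesis by simp
qed

lemma gd_props:
  "gd n F \<Longrightarrow> continuous_on (unit_disk n) F \<and>
     (\<forall>j<2*n. \<exists>G. gd n G \<and> (\<forall>x\<in>unit_disk n. ((\<lambda>s. F (x(j := x j + s))) has_real_derivative G x) (at 0)))"
proof (induction rule: gd.induct)
  case (gd_base h m)
  have c: "continuous_on (unit_disk n) (Ig m h)" by (rule Ig_cont[OF smooth_cont[OF gd_base]])
  have "\<exists>G. gd n G \<and> (\<forall>x\<in>unit_disk n. ((\<lambda>s. Ig m h (x(j := x j + s))) has_real_derivative G x) (at 0))"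
    if j: "j < 2*n" for j
    using gd.gd_base[OF smooth_pd[OF gd_base j], of "Suc m"] Ig_deriv[OF gd_base _ j] by blast
  then show ?case using c by blast
next
  case (gd_mul F i)
  have c: "continuous_on (unit_disk n) (\<lambda>x. x i * F x)"
    using gd_mul.IH by (intro continuous_on_mult cont_coord) auto
  have "\<exists>G. gd n G \<and> (\<forall>x\<in>unit_disk n. ((\<lambda>s. (x(j := x j + s)) i * F (x(j := x j + s))) has_real_derivative G x) (at 0))"
    if j: "j < 2*n" for j
  proof -
    obtain G where G: "gd n G" "\<And>x. x \<in> unit_disk n \<Longrightarrow> ((\<lambda>s. F (x(j := x j + s))) has_real_derivative G x) (at 0)"
      using gd_mul.IH j by blast
    define G' where "G' = (\<lambda>x. (if i = j then F x else 0) + x i * G x)"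
    have "gd n G'"
    proof (cases "i = j")
      case True
      then have "G' = (\<lambda>x. F x + x i * G x)" by (simp add: G'_def)
      then show ?thesis using gd_add[OF gd_mul.hyps gd.gd_mul[OF G(1)]] by simp
    next
      case False
      then have "G' = (\<lambda>x. 0 + x i * G x)" by (simp add: G'_def)
      then show ?thesis using gd_add[OF gd_zero gd.gd_mul[OF G(1)]] by simp
    qed
    moreover have "((\<lambda>s. (x(j := x j + s)) i * F (x(j := x j + s))) has_real_derivative G' x) (at 0)"
      if x: "x \<in> unit_disk n" for x
    proof -
      have "((\<lambda>s. (x(j := x j + s)) i * F (x(j := x j + s))) has_real_derivative
          (if i = j then 1 else 0) * F (x(j := x j + 0)) + G x * (x(j := x j + 0)) i) (at 0)"
        by (rule DERIV_mult[OF coord_deriv G(2)[OF x]])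
      moreover have u0: "x(j := x j + 0) = x" by simp
      moreover have "(if i = j then 1 else 0) * F x + G x * x i = G' x" by (simp add: G'_def)
      ultimately show ?thesis by (simp only: u0)
    qed
    ultimately show ?thesis by blast
  qed
  then show ?case using c by blast
next
  case (gd_add F G)
  have c: "continuous_on (unit_disk n) (\<lambda>x. F x + G x)"
    using gd_add.IH by (intro continuous_on_add) auto
  have "\<exists>H. gd n H \<and> (\<forall>x\<in>unit_disk n. ((\<lambda>s. F (x(j := x j + s)) + G (x(j := x j + s))) has_real_derivative H x) (at 0))"
    if j: "j < 2*n" for j
  proof -
    obtain F' where F': "gd n F'" "\<And>x. x \<in> unit_disk n \<Longrightarrow> ((\<lambda>s. F (x(j := x j + s))) has_real_derivative F' x) (at 0)"
      using gd_add.IH j by blast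
    obtain G' where G': "gd n G'" "\<And>x. x \<in> unit_disk n \<Longrightarrow> ((\<lambda>s. G (x(j := x j + s))) has_real_derivative G' x) (at 0)"
      using gd_add.IH j by blast
    show ?thesis
      by (rule exI[of _ "\<lambda>x. F' x + G' x"]) (use F' G' in \<open>auto intro: gd.gd_add DERIV_add\<close>)
  qed
  then show ?case using c by blast
next
  case (gd_cmul F c)
  have cc: "continuous_on (unit_disk n) (\<lambda>x. c * F x)"
    using gd_cmul.IH by (intro continuous_on_mult continuous_on_const) auto
  have "\<exists>H. gd n H \<and> (\<forall>x\<in>unit_disk n. ((\<lambda>s. c * F (x(j := x j + s))) has_real_derivative H x) (at 0))"
    if j: "j < 2*n" for j
  proof -
    obtain F' where F': "gd n F'" "\<And>x. x \<in> unit_disk n \<Longrightarrow> ((\<lambda>s. F (x(j := x j + s))) has_real_derivative F' x) (at 0)"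
      using gd_cmul.IH j by blast
    show ?thesis
      by (rule exI[of _ "\<lambda>x. c * F' x"]) (use F' in \<open>auto intro: gd.gd_cmul DERIV_cmult\<close>)
  qed
  then show ?case using cc by blast
next
  case gd_zero
  have "gd n (\<lambda>x. 0) \<and> (\<forall>x\<in>unit_disk n. ((\<lambda>s. 0) has_real_derivative 0) (at 0))"
    by (auto intro: gd.gd_zero)
  then show ?case by (auto intro: continuous_on_const)
qed

lemma gd_iter:
  assumes F: "gd n F"
  shows "set js \<subseteq> {..<2*n} \<Longrightarrow> \<exists>G. gd n G \<and> (\<forall>x\<in>unit_disk n. iter_pd js F x = G x)"
proof (induction js rule: rev_induct)
  case Nil then show ?case using F by auto
next
  case (snoc j js)
  then obtain G where G: "gd n G" "\<forall>x\<in>unit_disk n. iter_pd js F x = G x" by auto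
  have j: "j < 2*n" using snoc.prems by auto
  obtain G' where G': "gd n G'" "\<And>x. x \<in> unit_disk n \<Longrightarrow> ((\<lambda>s. G (x(j := x j + s))) has_real_derivative G' x) (at 0)"
    using gd_props[OF G(1)] j by blast
  have "iter_pd (js @ [j]) F x = G' x" if x: "x \<in> unit_disk n" for x
  proof -
    have "iter_pd (js @ [j]) F x = pd j (iter_pd js F) x" by (simp add: iter_pd_snoc)
    also have "\<dots> = pd j G x" by (rule pd_local[OF G(2) x j])
    also have "\<dots> = G' x" by (rule pd_eqI[OF G'(2)[OF x]])
    finally show ?thesis .
  qed
  then show ?case using G' by blast
qed

lemma gd_smooth:
  assumes F: "gd n F"
  shows "smooth_on n (unit_disk n) F"
  unfolding smooth_on_def
proof (intro allI impI, rule conjI)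
  fix js assume js: "set js \<subseteq> {..<2*n}"
  obtain G where G: "gd n G" "\<forall>x\<in>unit_disk n. iter_pd js F x = G x"
    using gd_iter[OF F js] by blast
  show "continuous_on (unit_disk n) (iter_pd js F)"
    using gd_props[OF G(1)] G(2) by (auto intro: continuous_on_eq)
  show "\<forall>j<2*n. \<forall>x\<in>unit_disk n. (\<lambda>t. iter_pd js F (x(j := x j + t))) differentiable at 0"
  proof (intro allI impI ballI)
    fix j x assume j: "j < 2*n" and x: "x \<in> unit_disk n"
    obtain G' where G': "\<And>x. x \<in> unit_disk n \<Longrightarrow> ((\<lambda>s. G (x(j := x j + s))) has_real_derivative G' x) (at 0)"
      using gd_props[OF G(1)] j by blast
    obtain d where d: "d > 0" "\<And>s. \<bar>s\<bar> < d \<Longrightarrow> x(j := x j + s) \<in> unit_disk n"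
      using U_line[OF x j] by blast
    have ev: "\<forall>\<^sub>F s in nhds 0. iter_pd js F (x(j := x j + s)) = G (x(j := x j + s))"
      unfolding eventually_nhds_metric using d G(2) by (auto simp: dist_real_def)
    have "((\<lambda>t. iter_pd js F (x(j := x j + t))) has_real_derivative G' x) (at 0)"
      using G'[OF x] by (subst DERIV_cong_ev[OF refl ev refl])
    then show "(\<lambda>t. iter_pd js F (x(j := x j + t))) differentiable at 0"
      by (rule deriv_differentiable)
  qed
qed

lemma U_near:
  assumes y: "y \<in> unit_disk n"
  obtains d where "d > 0" "\<And>w h. \<bar>h\<bar> < d \<Longrightarrow> (\<forall>i\<ge>2*n. w i = 0) \<Longrightarrow>
      (\<forall>i<2*n. \<bar>w i\<bar> \<le> \<bar>h\<bar> * \<bar>v i\<bar>) \<Longrightarrow> (\<lambda>i. y i + w i) \<in> unit_disk n"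
proof -
  define S where "S = (\<Sum>i<2*n. \<bar>v i\<bar>)"
  have S0: "S \<ge> 0" by (simp add: S_def sum_nonneg)
  define d where "d = (1 - L2_set y {..<2*n}) / (S + 1)"
  have ly: "L2_set y {..<2*n} < 1" using y by (simp add: U_iff)
  have d0: "d > 0" using ly S0 by (simp add: d_def)
  show ?thesis
  proof (rule that[OF d0])
    fix w and h :: real
    assume h: "\<bar>h\<bar> < d" and w0: "\<forall>i\<ge>2*n. w i = 0" and wb: "\<forall>i<2*n. \<bar>w i\<bar> \<le> \<bar>h\<bar> * \<bar>v i\<bar>"
    have "L2_set w {..<2*n} \<le> (\<Sum>i<2*n. \<bar>w i\<bar>)" by (rule L2_set_le_sum_abs)
    also have "\<dots> \<le> (\<Sum>i<2*n. \<bar>h\<bar> * \<bar>v i\<bar>)" using wb by (intro sum_mono) auto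
    also have "\<dots> = \<bar>h\<bar> * S" by (simp add: S_def sum_distrib_left)
    also have "\<dots> \<le> \<bar>h\<bar> * (S + 1)" using S0 by (simp add: mult_left_mono)
    also have "\<dots> < d * (S + 1)" using h S0 by (intro mult_strict_right_mono) auto
    also have "\<dots> = 1 - L2_set y {..<2*n}" using S0 by (simp add: d_def)
    finally show "(\<lambda>i. y i + w i) \<in> unit_disk n" by (rule U_perturb[OF y w0])
  qed
qed

lemma ray_deriv:
  fixes g :: "point \<Rightarrow> real" and D :: "nat \<Rightarrow> point \<Rightarrow> real"
  assumes der: "\<And>z j. z \<in> unit_disk n \<Longrightarrow> j < 2*n \<Longrightarrow> ((\<lambda>s. g (z(j := z j + s))) has_real_derivative D j z) (at 0)"
    and cont: "\<And>j. j < 2*n \<Longrightarrow> continuous_on (unit_disk n) (D j)"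
    and y: "y \<in> unit_disk n" and v: "\<forall>i\<ge>2*n. v i = 0"
  shows "((\<lambda>h. g (\<lambda>i. y i + h * v i)) has_real_derivative (\<Sum>j<2*n. v j * D j y)) (at 0)"
proof -
  define N where "N = 2*n"
  define tr where "tr j i = (if i < j then v i else 0)" for j i
  define e where "e j i = (if i = j then 1 else (0::real))" for j i :: nat
  define z where "z j h r = (\<lambda>i. y i + h * tr j i + e j i * (r * h * v j))" for j h r
  define p where "p j h = (\<lambda>i. y i + h * tr j i)" for j h
  obtain d where d: "d > 0" "\<And>w h. \<bar>h\<bar> < d \<Longrightarrow> (\<forall>i\<ge>2*n. w i = 0) \<Longrightarrow>
      (\<forall>i<2*n. \<bar>w i\<bar> \<le> \<bar>h\<bar> * \<bar>v i\<bar>) \<Longrightarrow> (\<lambda>i. y i + w i) \<in> unit_disk n"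
    using U_near[OF y] by blast
  have zU: "z j h r \<in> unit_disk n" if h: "\<bar>h\<bar> < d" and r: "r \<in> {0..1}" for j h r
  proof -
    have "(\<lambda>i. y i + (h * tr j i + e j i * (r * h * v j))) \<in> unit_disk n"
    proof (rule d(2)[OF h])
      show "\<forall>i\<ge>2*n. h * tr j i + e j i * (r * h * v j) = 0"
        using v by (auto simp: tr_def e_def)
      show "\<forall>i<2*n. \<bar>h * tr j i + e j i * (r * h * v j)\<bar> \<le> \<bar>h\<bar> * \<bar>v i\<bar>"
      proof (intro allI impI)
        fix i assume "i < 2*n"
        show "\<bar>h * tr j i + e j i * (r * h * v j)\<bar> \<le> \<bar>h\<bar> * \<bar>v i\<bar>"
        proof (cases "i = j")
          case True
          have r1: "\<bar>r\<bar> \<le> 1" using r by auto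
          have "\<bar>r * h * v j\<bar> = \<bar>r\<bar> * (\<bar>h\<bar> * \<bar>v j\<bar>)" by (simp add: abs_mult)
          also have "\<dots> \<le> 1 * (\<bar>h\<bar> * \<bar>v j\<bar>)" by (rule mult_right_mono[OF r1]) simp
          finally have "\<bar>r * h * v j\<bar> \<le> 1 * (\<bar>h\<bar> * \<bar>v j\<bar>)" .
          then show ?thesis using True by (simp add: tr_def e_def)
        next
          case False then show ?thesis by (simp add: tr_def e_def abs_mult)
        qed
      qed
    qed
    then show ?thesis by (simp add: z_def add.assoc)
  qed
  have z0: "z j h 0 = p j h" for j h by (simp add: z_def p_def)
  have z1: "z j h 1 = p (Suc j) h" for j h
    by (rule ext) (simp add: z_def p_def tr_def e_def)
  define \<Phi> where "\<Phi> j h = integral {0..1} (\<lambda>r. D j (z j h r))" for j h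
  have seg: "g (p (Suc j) h) - g (p j h) = h * v j * \<Phi> j h" if h: "\<bar>h\<bar> < d" and j: "j < 2*n" for j h
  proof -
    have dv: "((\<lambda>r. g (z j h r)) has_vector_derivative D j (z j h r) * (h * v j)) (at r within {0..1})"
      if r: "r \<in> {0..1}" for r
    proof -
      define q where "q = z j h r"
      have qU: "q \<in> unit_disk n" using zU[OF h r] by (simp add: q_def)
      have D0: "((\<lambda>s. g (q(j := q j + s))) has_real_derivative D j q) (at ((r - r) * (h * v j)))"
        using der[OF qU j] by simp
      have D1: "((\<lambda>r'. (r' - r) * (h * v j)) has_real_derivative h * v j) (at r)"
        by (auto intro!: derivative_eq_intros)
      have "((\<lambda>r'. g (q(j := q j + (r' - r) * (h * v j)))) has_real_derivative D j q * (h * v j)) (at r)"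
        by (rule DERIV_chain2[OF D0 D1])
      moreover have "(\<lambda>r'. g (q(j := q j + (r' - r) * (h * v j)))) = (\<lambda>r'. g (z j h r'))"
      proof (rule ext)
        fix r'
        have "q(j := q j + (r' - r) * (h * v j)) = z j h r'"
        proof (rule ext)
          fix i show "(q(j := q j + (r' - r) * (h * v j))) i = z j h r' i"
            by (cases "i = j") (simp_all add: q_def z_def e_def algebra_simps)
        qed
        then show "g (q(j := q j + (r' - r) * (h * v j))) = g (z j h r')" by simp
      qed
      ultimately have "((\<lambda>r'. g (z j h r')) has_real_derivative D j (z j h r) * (h * v j)) (at r)"
        by (simp add: q_def)
      then show ?thesis
        by (simp add: has_real_derivative_iff_has_vector_derivative has_vector_derivative_at_within)
    qed
    have "((\<lambda>r. D j (z j h r) * (h * v j)) has_integral g (z j h 1) - g (z j h 0)) {0..1}"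
      by (rule fundamental_theorem_of_calculus) (auto intro: dv)
    then have "g (z j h 1) - g (z j h 0) = integral {0..1} (\<lambda>r. D j (z j h r) * (h * v j))"
      by (rule integral_unique[symmetric])
    also have "\<dots> = \<Phi> j h * (h * v j)" by (simp add: \<Phi>_def integral_mult_left)
    finally show ?thesis by (simp add: z0 z1 mult_ac)
  qed
  have tele: "g (\<lambda>i. y i + h * v i) - g y = h * (\<Sum>j<2*n. v j * \<Phi> j h)" if h: "\<bar>h\<bar> < d" for h
  proof -
    have pN: "p (2*n) h = (\<lambda>i. y i + h * v i)"
      by (rule ext) (use v in \<open>auto simp: p_def tr_def\<close>)
    have p0: "p 0 h = y" by (simp add: p_def tr_def)
    have "g (\<lambda>i. y i + h * v i) - g y = (\<Sum>j<2*n. g (p (Suc j) h) - g (p j h))"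
      using sum_lessThan_telescope[of "\<lambda>j. g (p j h)" "2*n"] by (simp add: pN p0)
    also have "\<dots> = (\<Sum>j<2*n. h * v j * \<Phi> j h)"
      using seg h by (intro sum.cong) auto
    finally show ?thesis by (simp add: sum_distrib_left mult_ac)
  qed
  have Phicont: "isCont (\<Phi> j) 0" if j: "j < 2*n" for j
  proof -
    have mc: "continuous_on A (\<lambda>q. z j (fst q) (snd q))" for A :: "(real \<times> real) set"
      unfolding z_def
      by (rule continuous_on_coordinatewise_then_product) (intro continuous_intros)
    have "continuous_on (ball 0 d \<times> cbox 0 1) (\<lambda>q. D j (z j (fst q) (snd q)))"
      by (rule continuous_on_compose2[OF cont[OF j] mc]) (auto simp: cbox_interval dist_real_def intro!: zU)
    then have "continuous_on (ball 0 d) (\<lambda>h. integral (cbox 0 1) (\<lambda>r. D j (z j h r)))"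
      by (intro integral_continuous_on_param) (simp add: split_beta)
    then have "continuous_on (ball 0 d) (\<Phi> j)"
      by (simp add: \<Phi>_def cbox_interval)
    then show ?thesis using d(1) by (simp add: continuous_on_eq_continuous_at)
  qed
  have Phi0: "\<Phi> j 0 = D j y" for j
  proof -
    have "z j 0 r = y" for r by (simp add: z_def)
    then show ?thesis by (simp add: \<Phi>_def)
  qed
  have lim: "((\<lambda>h. \<Sum>j<2*n. v j * \<Phi> j h) \<longlongrightarrow> (\<Sum>j<2*n. v j * D j y)) (at 0)"
  proof -
    have "((\<lambda>h. \<Sum>j<2*n. v j * \<Phi> j h) \<longlongrightarrow> (\<Sum>j<2*n. v j * \<Phi> j 0)) (at 0)"
      using Phicont by (intro tendsto_intros) (simp add: isCont_def)
    then show ?thesis by (simp add: Phi0)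
  qed
  have ev: "\<forall>\<^sub>F h in at 0. (\<Sum>j<2*n. v j * \<Phi> j h) = (g (\<lambda>i. y i + (0 + h) * v i) - g (\<lambda>i. y i + 0 * v i)) / h"
  proof -
    have "\<forall>\<^sub>F h in at (0::real). h \<noteq> 0 \<and> \<bar>h\<bar> < d"
      using d(1) by (auto simp: eventually_at dist_real_def intro: exI[of _ d])
    then show ?thesis
    proof (rule eventually_mono)
      fix h :: real assume "h \<noteq> 0 \<and> \<bar>h\<bar> < d"
      then show "(\<Sum>j<2*n. v j * \<Phi> j h) = (g (\<lambda>i. y i + (0 + h) * v i) - g (\<lambda>i. y i + 0 * v i)) / h"
        using tele[of h] by simp
    qed
  qed
  show ?thesis unfolding DERIV_def
    by (rule Lim_transform_eventually[OF lim ev])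
qed

lemma Ig_cmul: "Ig m (\<lambda>y. c * h y) x = c * Ig m h x"
proof -
  have "(\<lambda>t. t^m * (c * h (\<lambda>i. t * x i))) = (\<lambda>t. c * (t^m * h (\<lambda>i. t * x i)))"
    by (simp add: mult_ac)
  then show ?thesis by (simp add: Ig_def)
qed

lemma Ig_zero: "Ig m (\<lambda>y. 0) x = 0"
  by (simp add: Ig_def)

lemma Ig_neg: "Ig m (\<lambda>y. - h y) x = - Ig m h x"
  using Ig_cmul[of m "-1" h x] by simp

lemma Ig_cong:
  assumes "\<forall>y\<in>unit_disk n. h y = h' y" "x \<in> unit_disk n"
  shows "Ig m h x = Ig m h' x"
  unfolding Ig_def
  by (rule integral_cong) (use assms U_scale in auto)

lemma Ig_sum:
  assumes x: "x \<in> unit_disk n" and A: "finite A" and c: "\<And>a. a \<in> A \<Longrightarrow> continuous_on (unit_disk n) (h a)"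
  shows "Ig m (\<lambda>y. \<Sum>a\<in>A. h a y) x = (\<Sum>a\<in>A. Ig m (h a) x)"
proof -
  have "Ig m (\<lambda>y. \<Sum>a\<in>A. h a y) x = integral {0..1} (\<lambda>t. \<Sum>a\<in>A. t^m * h a (\<lambda>i. t * x i))"
    by (simp add: Ig_def sum_distrib_left)
  also have "\<dots> = (\<Sum>a\<in>A. integral {0..1} (\<lambda>t. t^m * h a (\<lambda>i. t * x i)))"
    by (rule integral_sum[OF A]) (rule Ig_integrable[OF c x])
  finally show ?thesis by (simp add: Ig_def)
qed

lemma ftc_ray:
  assumes h: "smooth_on n (unit_disk n) h" and x: "x \<in> unit_disk n" and k: "0 < k"
  shows "real k * Ig (k-1) h x + (\<Sum>i<2*n. x i * Ig k (pd i h) x) = h x"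
proof -
  have x0: "\<forall>i\<ge>2*n. x i = 0" using x by (simp add: U_iff)
  have hc: "continuous_on (unit_disk n) h" by (rule smooth_cont[OF h])
  have pc: "\<And>i. i < 2*n \<Longrightarrow> continuous_on (unit_disk n) (pd i h)" by (rule pd_cont[OF h])
  define f' where "f' t = real k * (t^(k-1) * h (\<lambda>i. t * x i)) + (\<Sum>i<2*n. x i * (t^k * pd i h (\<lambda>i. t * x i)))" for t
  have dv: "((\<lambda>t. t^k * h (\<lambda>i. t * x i)) has_vector_derivative f' t) (at t within {0..1})"
    if t: "t \<in> {0..1}" for t
  proof -
    define y where "y = (\<lambda>i. t * x i)"
    have yU: "y \<in> unit_disk n" using U_scale[OF x] t by (simp add: y_def)
    have R: "((\<lambda>s. h (\<lambda>i. y i + s * x i)) has_real_derivative (\<Sum>j<2*n. x j * pd j h y)) (at (t - t))"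
      using ray_deriv[of n h "\<lambda>j. pd j h", OF smooth_D[OF h] pc yU x0] by simp
    have D1: "((\<lambda>t'. t' - t) has_real_derivative 1) (at t)"
      by (auto intro!: derivative_eq_intros)
    have "((\<lambda>t'. h (\<lambda>i. y i + (t' - t) * x i)) has_real_derivative (\<Sum>j<2*n. x j * pd j h y) * 1) (at t)"
      by (rule DERIV_chain2[OF R D1])
    moreover have "(\<lambda>t'. h (\<lambda>i. y i + (t' - t) * x i)) = (\<lambda>t'. h (\<lambda>i. t' * x i))"
      by (rule ext) (simp add: y_def algebra_simps)
    ultimately have H: "((\<lambda>t'. h (\<lambda>i. t' * x i)) has_real_derivative (\<Sum>j<2*n. x j * pd j h y)) (at t)"
      by simp
    have P: "((\<lambda>t'. t'^k) has_real_derivative real k * t^(k - Suc 0)) (at t)"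
      by (rule DERIV_pow)
    have "((\<lambda>t'. t'^k * h (\<lambda>i. t' * x i)) has_real_derivative
        real k * t^(k - Suc 0) * h (\<lambda>i. t * x i) + (\<Sum>j<2*n. x j * pd j h y) * t^k) (at t)"
      by (rule DERIV_mult[OF P H])
    moreover have "real k * t^(k - Suc 0) * h (\<lambda>i. t * x i) + (\<Sum>j<2*n. x j * pd j h y) * t^k = f' t"
      by (simp add: f'_def y_def sum_distrib_left sum_distrib_right mult_ac)
    ultimately have "((\<lambda>t'. t'^k * h (\<lambda>i. t' * x i)) has_real_derivative f' t) (at t)" by simp
    then show ?thesis
      by (simp add: has_real_derivative_iff_has_vector_derivative has_vector_derivative_at_within)
  qed
  have "(f' has_integral (1^k * h (\<lambda>i. 1 * x i) - 0^k * h (\<lambda>i. 0 * x i))) {0..1}"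
    by (rule fundamental_theorem_of_calculus) (auto intro: dv)
  moreover have z: "(0::real)^k = 0" using k by simp
  ultimately have I1: "(f' has_integral h x) {0..1}" by (simp add: z)
  have I2: "(f' has_integral (real k * Ig (k-1) h x + (\<Sum>i<2*n. x i * Ig k (pd i h) x))) {0..1}"
    unfolding f'_def
  proof (intro has_integral_add has_integral_mult_right has_integral_sum)
    show "((\<lambda>t. t^(k-1) * h (\<lambda>i. t * x i)) has_integral Ig (k-1) h x) {0..1}"
      unfolding Ig_def by (rule integrable_integral[OF Ig_integrable[OF hc x]])
    show "((\<lambda>t. t^k * pd i h (\<lambda>i. t * x i)) has_integral Ig k (pd i h) x) {0..1}" if "i \<in> {..<2*n}" for i
      unfolding Ig_def by (rule integrable_integral[OF Ig_integrable[OF pc x]]) (use that in auto)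
  qed simp
  show ?thesis using has_integral_unique[OF I2 I1] .
qed

lemma sign_clos:
  assumes "i \<notin> K" "j \<in> K"
  shows "sg j (K - {j}) * sg i (K - {j}) = - (sg i K * sg j (insert i (K - {j})))"
proof -
  have K: "K = insert j (K - {j})" using assms by auto
  have ij: "i \<noteq> j" using assms by auto
  have "sg i K = (if j < i then - sg i (K - {j}) else sg i (K - {j}))"
    by (subst K, rule sg_insert) simp
  moreover have "sg j (insert i (K - {j})) = (if i < j then - sg j (K - {j}) else sg j (K - {j}))"
    by (rule sg_insert) (use assms in auto)
  ultimately show ?thesis using ij by (cases "i < j") auto
qed

lemma ext_d_alt:
  "ext_d n B x K = (if K \<subseteq> {..<2*n} then (\<Sum>j\<in>K. sg j (K - {j}) * pd j (\<lambda>y. B y (K - {j})) x) else 0)"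
  by (simp add: ext_d_def sg_def)

lemma clos_id:
  assumes clos: "ext_d n B y (insert i K) = 0" and K: "K \<subseteq> {..<2*n}" and i: "i < 2*n"
  shows "(\<Sum>j\<in>K. if i \<in> K - {j} then 0 else sg j (K - {j}) * sg i (K - {j}) * pd j (\<lambda>z. B z (insert i (K - {j}))) y)
       = pd i (\<lambda>z. B z K) y"
proof -
  have fin: "finite K" using K finite_subset by blast
  show ?thesis
  proof (cases "i \<in> K")
    case True
    have "(\<Sum>j\<in>K. if i \<in> K - {j} then 0 else sg j (K - {j}) * sg i (K - {j}) * pd j (\<lambda>z. B z (insert i (K - {j}))) y)
        = (\<Sum>j\<in>K. if j = i then pd i (\<lambda>z. B z K) y else 0)"
    proof (rule sum.cong[OF refl])
      fix j assume j: "j \<in> K"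
      show "(if i \<in> K - {j} then 0 else sg j (K - {j}) * sg i (K - {j}) * pd j (\<lambda>z. B z (insert i (K - {j}))) y)
          = (if j = i then pd i (\<lambda>z. B z K) y else 0)"
      proof (cases "j = i")
        case True
        have "insert i (K - {i}) = K" using \<open>i \<in> K\<close> by auto
        then show ?thesis using True by simp
      qed (use True in auto)
    qed
    also have "\<dots> = pd i (\<lambda>z. B z K) y" using True fin by simp
    finally show ?thesis .
  next
    case False
    have iK: "insert i K \<subseteq> {..<2*n}" using K i by auto
    have "0 = (\<Sum>j\<in>insert i K. sg j (insert i K - {j}) * pd j (\<lambda>z. B z (insert i K - {j})) y)"
      using clos iK by (simp add: ext_d_alt)
    also have "\<dots> = sg i K * pd i (\<lambda>z. B z K) y + (\<Sum>j\<in>K. sg j (insert i (K - {j})) * pd j (\<lambda>z. B z (insert i (K - {j}))) y)"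
    proof -
      have e1: "insert i K - {i} = K" using False by auto
      have e2: "\<And>j. j \<in> K \<Longrightarrow> insert i K - {j} = insert i (K - {j})" using False by auto
      show ?thesis using fin False by (simp add: e1 e2 cong: sum.cong)
    qed
    finally have cl: "(\<Sum>j\<in>K. sg j (insert i (K - {j})) * pd j (\<lambda>z. B z (insert i (K - {j}))) y) = - (sg i K * pd i (\<lambda>z. B z K) y)"
      by linarith
    have "(\<Sum>j\<in>K. if i \<in> K - {j} then 0 else sg j (K - {j}) * sg i (K - {j}) * pd j (\<lambda>z. B z (insert i (K - {j}))) y)
        = (\<Sum>j\<in>K. - sg i K * (sg j (insert i (K - {j})) * pd j (\<lambda>z. B z (insert i (K - {j}))) y))"
      using False by (intro sum.cong refl) (simp add: sign_clos)
    also have "\<dots> = - sg i K * (\<Sum>j\<in>K. sg j (insert i (K - {j})) * pd j (\<lambda>z. B z (insert i (K - {j}))) y)"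
      by (simp add: sum_distrib_left)
    also have "\<dots> = (sg i K * sg i K) * pd i (\<lambda>z. B z K) y" by (simp add: cl)
    finally show ?thesis by simp
  qed
qed

lemma gd_sum: "finite A \<Longrightarrow> (\<And>a. a \<in> A \<Longrightarrow> gd n (F a)) \<Longrightarrow> gd n (\<lambda>x. \<Sum>a\<in>A. F a x)"
proof (induction A rule: finite_induct)
  case empty then show ?case by (simp add: gd_zero)
next
  case (insert a A)
  then have "gd n (\<lambda>x. F a x + (\<Sum>a\<in>A. F a x))" by (intro gd_add) auto
  then show ?case using insert by simp
qed

lemma interior_Ig: "interior a (\<lambda>L. Ig m (\<lambda>y. F y L) x) = (\<lambda>L. Ig m (\<lambda>y. interior a (F y) L) x)"
  by (rule ext) (simp add: interior_alt Ig_zero Ig_cmul)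

lemma cont_interior:
  assumes "\<And>L. continuous_on S (\<lambda>y. F y L)"
  shows "continuous_on S (\<lambda>y. interior a (F y) L)"
proof (cases "a \<in> L")
  case True then show ?thesis by (simp add: interior_alt)
next
  case False then show ?thesis by (simp add: interior_alt) (intro continuous_intros assms)
qed

lemma Lambda_Ig:
  assumes x: "x \<in> unit_disk n" and c: "\<And>L. continuous_on (unit_disk n) (\<lambda>y. F y L)"
  shows "Lambda n (\<lambda>L. Ig m (\<lambda>y. F y L) x) J = Ig m (\<lambda>y. Lambda n (F y) J) x"
proof -
  have "Lambda n (\<lambda>L. Ig m (\<lambda>y. F y L) x) J = - (\<Sum>q<n. Ig m (\<lambda>y. interior q (interior (q+n) (F y)) J) x)"
    by (simp add: Lambda_alt interior_Ig)
  also have "\<dots> = Ig m (\<lambda>y. - (\<Sum>q<n. interior q (interior (q+n) (F y)) J)) x"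
    by (simp add: Ig_neg Ig_sum[OF x] cont_interior c)
  also have "\<dots> = Ig m (\<lambda>y. Lambda n (F y) J) x" by (simp add: Lambda_alt)
  finally show ?thesis .
qed

definition Bp :: "nat \<Rightarrow> nat \<Rightarrow> dform \<Rightarrow> dform" where
  "Bp n k B = (\<lambda>x J. \<Sum>i<2*n. if i \<in> J then 0 else sg i J * (x i * Ig (k-1) (\<lambda>y. B y (insert i J)) x))"

locale PS =
  fixes n k :: nat and B :: dform
  assumes k0: "0 < k" and kn: "k \<le> n" and BP: "B \<in> Pforms n k"
    and clos: "\<forall>x\<in>unit_disk n. ext_d n B x = zero_form"
begin

lemma n0: "0 < n" using k0 kn by simp

lemma Balg: "is_alg_form n k (B x)"
  using BP by (simp add: Pforms_def smooth_form_def)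

lemma Bsm: "smooth_on n (unit_disk n) (\<lambda>x. B x I)"
  using BP by (simp add: Pforms_def smooth_form_def)

lemma Bprim: "x \<in> unit_disk n \<Longrightarrow> Lambda n (B x) = zero_form"
  using BP by (simp add: Pforms_def)

lemma Bcont: "continuous_on (unit_disk n) (\<lambda>x. B x I)"
  by (rule smooth_cont[OF Bsm])

lemma Bp_alg: "is_alg_form n (k-1) (Bp n k B x)"
  unfolding is_alg_form_def
proof (intro allI impI)
  fix J assume ne: "Bp n k B x J \<noteq> 0"
  show "J \<subseteq> {..<2*n} \<and> card J = k - 1"
  proof (rule ccontr)
    assume nJ: "\<not> (J \<subseteq> {..<2*n} \<and> card J = k - 1)"
    have "(\<lambda>y. B y (insert i J)) = (\<lambda>y. 0)" if "i < 2*n" "i \<notin> J" for i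
    proof (rule ext, rule ccontr)
      fix y assume "B y (insert i J) \<noteq> 0"
      then have "insert i J \<subseteq> {..<2*n}" "card (insert i J) = k"
        using Balg[of y] unfolding is_alg_form_def by blast+
      then have sub: "insert i J \<subseteq> {..<2*n}" and ck: "card (insert i J) = k" by auto
      have fJ: "finite J" using finite_subset[OF sub finite_lessThan] by simp
      have "card J = k - 1" using card_insert_disjoint[OF fJ \<open>i \<notin> J\<close>] ck by simp
      moreover have "J \<subseteq> {..<2*n}" using sub by simp
      ultimately show False using nJ by simp
    qed
    then have zz: "\<And>i. i < 2*n \<Longrightarrow> i \<notin> J \<Longrightarrow> Ig (k-1) (\<lambda>y. B y (insert i J)) x = 0"
      by (simp add: Ig_zero)
    have "Bp n k B x J = 0" unfolding Bp_def
    proof (intro sum.neutral ballI)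
      fix i assume "i \<in> {..<2*n}"
      then show "(if i \<in> J then 0 else sg i J * (x i * Ig (k-1) (\<lambda>y. B y (insert i J)) x)) = 0"
        using zz[of i] by (cases "i \<in> J") auto
    qed
    then show False using ne by simp
  qed
qed

lemma Bp_gd: "gd n (\<lambda>x. Bp n k B x J)"
  unfolding Bp_def
proof (rule gd_sum)
  fix i assume "i \<in> {..<2*n}"
  show "gd n (\<lambda>x. if i \<in> J then 0 else sg i J * (x i * Ig (k-1) (\<lambda>y. B y (insert i J)) x))"
  proof (cases "i \<in> J")
    case True then show ?thesis by (simp add: gd_zero)
  next
    case False then show ?thesis by (simp add: gd_cmul gd_mul gd_base Bsm)
  qed
qed simp

lemma Bp_smooth: "smooth_form n (k-1) (Bp n k B)"
  unfolding smooth_form_def using Bp_alg gd_smooth[OF Bp_gd] by blast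

lemma Bp_int: "Bp n k B x = (\<lambda>L. \<Sum>i<2*n. x i * Ig (k-1) (\<lambda>y. interior i (B y) L) x)"
  unfolding Bp_def
  by (rule ext, rule sum.cong[OF refl]) (simp add: interior_alt Ig_zero Ig_cmul)

lemma Bp_prim:
  assumes x: "x \<in> unit_disk n"
  shows "Lambda n (Bp n k B x) = zero_form"
proof (rule ext)
  fix J
  have ci: "continuous_on (unit_disk n) (\<lambda>y. interior i (B y) L)" for i L
    by (rule cont_interior) (rule Bcont)
  have "Lambda n (Bp n k B x) J = (\<Sum>i<2*n. x i * Lambda n (\<lambda>L. Ig (k-1) (\<lambda>y. interior i (B y) L) x) J)"
    unfolding Bp_int by (simp add: Lambda_lin)
  also have "\<dots> = (\<Sum>i<2*n. x i * Ig (k-1) (\<lambda>y. Lambda n (interior i (B y)) J) x)"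
    by (simp add: Lambda_Ig[OF x] ci)
  also have "\<dots> = (\<Sum>i<2*n. x i * Ig (k-1) (\<lambda>y. 0) x)"
  proof (intro sum.cong refl arg_cong2[where f="(*)"])
    fix i
    show "Ig (k-1) (\<lambda>y. Lambda n (interior i (B y)) J) x = Ig (k-1) (\<lambda>y. 0) x"
      by (rule Ig_cong[OF _ x]) (simp add: Lambda_interior Bprim interior_lin)
  qed
  also have "\<dots> = 0" by (simp add: Ig_zero)
  finally show "Lambda n (Bp n k B x) J = zero_form J" by simp
qed

lemma Bp_pd:
  assumes x: "x \<in> unit_disk n" and j: "j < 2*n"
  shows "pd j (\<lambda>y. Bp n k B y J) x = (\<Sum>i<2*n. if i \<in> J then 0 else sg i J *
      ((if i = j then 1 else 0) * Ig (k-1) (\<lambda>y. B y (insert i J)) x + x i * Ig k (pd j (\<lambda>y. B y (insert i J))) x))"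
proof (rule pd_eqI)
  have u0: "x(j := x j + 0) = x" by simp
  have sk: "Suc (k - 1) = k" using k0 by simp
  show "((\<lambda>s. Bp n k B (x(j := x j + s)) J) has_real_derivative (\<Sum>i<2*n. if i \<in> J then 0 else sg i J *
      ((if i = j then 1 else 0) * Ig (k-1) (\<lambda>y. B y (insert i J)) x + x i * Ig k (pd j (\<lambda>y. B y (insert i J))) x))) (at 0)"
    unfolding Bp_def
  proof (rule DERIV_sum)
    fix i assume "i \<in> {..<2*n}"
    show "((\<lambda>s. if i \<in> J then 0 else sg i J * ((x(j := x j + s)) i * Ig (k-1) (\<lambda>y. B y (insert i J)) (x(j := x j + s))))
        has_real_derivative (if i \<in> J then 0 else sg i J *
      ((if i = j then 1 else 0) * Ig (k-1) (\<lambda>y. B y (insert i J)) x + x i * Ig k (pd j (\<lambda>y. B y (insert i J))) x))) (at 0)"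
    proof (cases "i \<in> J")
      case True then show ?thesis by simp
    next
      case False
      have "((\<lambda>s. (x(j := x j + s)) i * Ig (k-1) (\<lambda>y. B y (insert i J)) (x(j := x j + s))) has_real_derivative
          (if i = j then 1 else 0) * Ig (k-1) (\<lambda>y. B y (insert i J)) (x(j := x j + 0)) +
          Ig (Suc (k-1)) (pd j (\<lambda>y. B y (insert i J))) x * (x(j := x j + 0)) i) (at 0)"
        by (rule DERIV_mult[OF coord_deriv Ig_deriv[OF Bsm x j]])
      then have "((\<lambda>s. (x(j := x j + s)) i * Ig (k-1) (\<lambda>y. B y (insert i J)) (x(j := x j + s))) has_real_derivative
          (if i = j then 1 else 0) * Ig (k-1) (\<lambda>y. B y (insert i J)) x + x i * Ig k (pd j (\<lambda>y. B y (insert i J))) x) (at 0)"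
        by (simp only: u0 sk mult.commute[of "Ig k _ x"])
      then show ?thesis using False by (simp add: DERIV_cmult)
    qed
  qed
qed

end

context PS
begin

lemma Bp_d:
  assumes x: "x \<in> unit_disk n"
  shows "ext_d n (Bp n k B) x = B x"
proof (rule ext)
  fix K
  show "ext_d n (Bp n k B) x K = B x K"
  proof (cases "K \<subseteq> {..<2*n}")
    case False
    then have "B x K = 0" using Balg[of x] unfolding is_alg_form_def by blast
    then show ?thesis using False by (simp add: ext_d_alt)
  next
    case True
    have fin: "finite K" using finite_subset[OF True finite_lessThan] by simp
    define h where "h = (\<lambda>y. B y K)"
    define E where "E j i = (if i \<in> K - {j} then 0 else sg j (K - {j}) * sg i (K - {j}) *
        ((if i = j then 1 else 0) * Ig (k-1) (\<lambda>y. B y (insert i (K - {j}))) x))" for j i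
    define F where "F j i = (if i \<in> K - {j} then 0 else sg j (K - {j}) * sg i (K - {j}) *
        (x i * Ig k (pd j (\<lambda>y. B y (insert i (K - {j})))) x))" for j i
    have "ext_d n (Bp n k B) x K = (\<Sum>j\<in>K. sg j (K - {j}) * pd j (\<lambda>y. Bp n k B y (K - {j})) x)"
      using True by (simp add: ext_d_alt)
    also have "\<dots> = (\<Sum>j\<in>K. \<Sum>i<2*n. E j i + F j i)"
    proof (rule sum.cong[OF refl])
      fix j assume j: "j \<in> K"
      then have jn: "j < 2*n" using True by auto
      show "sg j (K - {j}) * pd j (\<lambda>y. Bp n k B y (K - {j})) x = (\<Sum>i<2*n. E j i + F j i)"
        unfolding Bp_pd[OF x jn] sum_distrib_left
        by (rule sum.cong[OF refl]) (simp add: E_def F_def algebra_simps)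
    qed
    also have "\<dots> = (\<Sum>j\<in>K. \<Sum>i<2*n. E j i) + (\<Sum>j\<in>K. \<Sum>i<2*n. F j i)"
      by (simp add: sum.distrib)
    also have "(\<Sum>j\<in>K. \<Sum>i<2*n. E j i) = real (card K) * Ig (k-1) h x"
    proof -
      have "(\<Sum>i<2*n. E j i) = Ig (k-1) h x" if j: "j \<in> K" for j
      proof -
        have jn: "j < 2*n" using True j by auto
        have "(\<Sum>i<2*n. E j i) = (\<Sum>i<2*n. if i = j then Ig (k-1) h x else 0)"
        proof (rule sum.cong[OF refl])
          fix i assume "i \<in> {..<2*n}"
          show "E j i = (if i = j then Ig (k-1) h x else 0)"
          proof (cases "i = j")
            case True
            have "insert j (K - {j}) = K" using j by auto
            then show ?thesis using True by (simp add: E_def h_def)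
          qed (simp add: E_def)
        qed
        also have "\<dots> = Ig (k-1) h x" using jn by simp
        finally show ?thesis .
      qed
      then show ?thesis by simp
    qed
    also have "(\<Sum>j\<in>K. \<Sum>i<2*n. F j i) = (\<Sum>i<2*n. x i * Ig k (pd i h) x)"
    proof -
      have "(\<Sum>j\<in>K. F j i) = x i * Ig k (pd i h) x" if i: "i < 2*n" for i
      proof -
        define G where "G j y = (if i \<in> K - {j} then 0 else sg j (K - {j}) * sg i (K - {j}) *
            pd j (\<lambda>z. B z (insert i (K - {j}))) y)" for j y
        have Gc: "continuous_on (unit_disk n) (G j)" if "j \<in> K" for j
        proof (cases "i \<in> K - {j}")
          case True then show ?thesis by (simp add: G_def)
        next
          case False
          have jn: "j < 2*n" using True that by auto
          have "G j = (\<lambda>y. (sg j (K - {j}) * sg i (K - {j})) * pd j (\<lambda>z. B z (insert i (K - {j}))) y)"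
            using False by (auto simp: G_def fun_eq_iff)
          then show ?thesis
            by (simp only:) (intro continuous_intros pd_cont[OF Bsm jn])
        qed
        have IG: "Ig k (G j) x = (if i \<in> K - {j} then 0 else sg j (K - {j}) * sg i (K - {j}) *
            Ig k (pd j (\<lambda>y. B y (insert i (K - {j})))) x)" for j
        proof (cases "i \<in> K - {j}")
          case True
          then have "G j = (\<lambda>y. 0)" by (auto simp: G_def fun_eq_iff)
          then show ?thesis using True by (simp add: Ig_zero)
        next
          case False
          have "G j = (\<lambda>y. (sg j (K - {j}) * sg i (K - {j})) * pd j (\<lambda>z. B z (insert i (K - {j}))) y)"
            using False by (auto simp: G_def fun_eq_iff)
          then show ?thesis using False by (auto simp: Ig_cmul)
        qed
        have "(\<Sum>j\<in>K. F j i) = x i * (\<Sum>j\<in>K. Ig k (G j) x)"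
          unfolding sum_distrib_left IG F_def by (rule sum.cong[OF refl]) (auto simp: mult_ac)
        also have "(\<Sum>j\<in>K. Ig k (G j) x) = Ig k (\<lambda>y. \<Sum>j\<in>K. G j y) x"
          by (rule Ig_sum[OF x fin Gc, symmetric])
        also have "\<dots> = Ig k (pd i h) x"
        proof (rule Ig_cong[OF _ x], intro ballI)
          fix y assume y: "y \<in> unit_disk n"
          have "ext_d n B y (insert i K) = 0" using clos y by simp
          then show "(\<Sum>j\<in>K. G j y) = pd i h y"
            unfolding G_def h_def by (rule clos_id[OF _ True i])
        qed
        finally show ?thesis .
      qed
      then show ?thesis by (subst sum.swap) simp
    qed
    finally have main: "ext_d n (Bp n k B) x K = real (card K) * Ig (k-1) h x + (\<Sum>i<2*n. x i * Ig k (pd i h) x)" .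
    show ?thesis
    proof (cases "card K = k")
      case True
      show ?thesis unfolding main True h_def by (rule ftc_ray[OF Bsm x k0])
    next
      case False
      have hz: "h = (\<lambda>y. 0)"
      proof (rule ext, rule ccontr)
        fix y assume "h y \<noteq> 0"
        then show False using Balg[of y] False unfolding is_alg_form_def h_def by blast
      qed
      have "B x K = 0" using hz by (simp add: h_def fun_eq_iff)
      moreover have pz: "pd i (\<lambda>y. 0) = (\<lambda>y. 0)" for i by (rule ext) simp
      ultimately show ?thesis unfolding main hz by (simp add: Ig_zero pz)
    qed
  qed
qed

lemma Lop_zero: "Lop n zero_form K = 0"
  by (simp add: Lop_def wedge_def)

lemma Bp_pm:
  assumes x: "x \<in> unit_disk n"
  shows "partial_minus n (k-1) (Bp n k B) x = zero_form"
proof (cases "k - 1 = 0")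
  case True then show ?thesis by (simp add: partial_minus_def)
next
  case False
  then have k2: "2 \<le> k" by simp
  define P where "P c \<longleftrightarrow> is_alg_form n (k - 1 - 1) c \<and> Lambda n c = zero_form \<and>
        (\<exists>a. is_alg_form n (k - 1 + 1) a \<and> Lambda n a = zero_form \<and>
             ext_d n (Bp n k B) x = (\<lambda>K. a K + Lop n c K))" for c
  have "(THE c. P c) = zero_form"
  proof (rule the_equality)
    show "P zero_form"
      unfolding P_def
    proof (intro conjI exI)
      show "is_alg_form n (k - 1 - 1) zero_form" by (simp add: is_alg_form_def)
      show "Lambda n zero_form = zero_form" by (rule ext) (simp add: Lambda_lin)
      show "is_alg_form n (k - 1 + 1) (B x)" using Balg[of x] k0 by simp
      show "Lambda n (B x) = zero_form" by (rule Bprim[OF x])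
      show "ext_d n (Bp n k B) x = (\<lambda>K. B x K + Lop n zero_form K)"
        by (simp add: Bp_d[OF x] Lop_zero)
    qed
  next
    fix c assume Pc: "P c"
    then obtain a where c: "is_alg_form n (k - 1 - 1) c" "Lambda n c = zero_form"
      and a: "Lambda n a = zero_form" and e: "ext_d n (Bp n k B) x = (\<lambda>K. a K + Lop n c K)"
      unfolding P_def by blast
    have Le: "Lop n c = (\<lambda>K. B x K - a K)"
    proof (rule ext)
      fix K
      have "B x K = a K + Lop n c K" using e Bp_d[OF x] by metis
      then show "Lop n c K = B x K - a K" by simp
    qed
    show "c = zero_form"
    proof (rule ext)
      fix J
      have "c J = 0"
      proof (rule prim_unique[OF n0 c(1)])
        show "k - 1 - 1 + 2 \<le> n" using k2 kn by simp
        show "\<And>J. Lambda n c J = 0" using c(2) by simp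
        show "\<And>J. Lambda n (Lop n c) J = 0"
          unfolding Le by (simp add: Lambda_lin Bprim[OF x] a)
      qed
      then show "c J = zero_form J" by simp
    qed
  qed
  then show ?thesis using False by (simp add: partial_minus_def P_def)
qed

end

theorem proposition3p9:
  fixes n k :: nat and B :: dform
  assumes "0 < k" and "k \<le> n"
    and "B \<in> Pforms n k"
    and "\<forall>x\<in>unit_disk n. ext_d n B x = zero_form"
  shows "\<exists>B'. B' \<in> Pprime n (k - 1) \<and> (\<forall>x\<in>unit_disk n. B x = ext_d n B' x)"
proof -
  interpret PS n k B using assms by unfold_locales
  have "Bp n k B \<in> Pprime n (k - 1)"
    unfolding Pprime_def Pforms_def
    using kn Bp_smooth Bp_prim Bp_pm by auto
  moreover have "\<forall>x\<in>unit_disk n. B x = ext_d n (Bp n k B) x"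
    using Bp_d by simp
  ultimately show ?thesis by blast
qed

end
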